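(* Let $A,B\in\mathbb M(n)$, $1\le k\le n$, let $A=U|A|$ be a polar decomposition of $A$, and suppose $s_k(A)>0$. Then $A$ is norm-parallel to $B$ in $\|\cdot\|_{(k)}$ (i.e. $\|A+\lambda B\|_{(k)}=\|A\|_{(k)}+\|B\|_{(k)}$ for some $\lambda\in\mathbb C$ with $|\lambda|=1$) if and only if there exist $k$ orthonormal vectors $u_1,\dots,u_k\in\mathbb C^n$ such that $|A|u_i=s_i(A)u_i$ for all $1\le i\le k$ and $\big|\sum_{i=1}^k\langle u_i,U^*Bu_i\rangle\big|=\|B\|_{(k)}$.
   Context: $U$ is unitary, $|A|=(A^*A)^{1/2}$, $s_1(A)\ge\dots\ge s_n(A)$ are the singular values, and $\|X\|_{(k)}$ is the sum of the $k$ largest singular values of $X$. Inner products are conjugate linear in the first argument and linear in the second. *)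

theory Defs
  imports "Jordan_Normal_Form.Jordan_Normal_Form" "Jordan_Normal_Form.Schur_Decomposition" "HOL-Library.Multiset"
begin

(* Inner product on C^n, conjugate-linear in the FIRST argument: <x,y> = sum conj(x_i) y_i *)
definition cinner :: "complex vec \<Rightarrow> complex vec \<Rightarrow> complex" where
  "cinner x y = conjugate x \<bullet> y"

abbreviation adj :: "complex mat \<Rightarrow> complex mat" where
  "adj A \<equiv> mat_adjoint A"

definition unitary_mat :: "nat \<Rightarrow> complex mat \<Rightarrow> bool" where
  "unitary_mat n U \<longleftrightarrow> U \<in> carrier_mat n n \<and> adj U * U = 1\<^sub>m n \<and> U * adj U = 1\<^sub>m n"

definition psd_mat :: "nat \<Rightarrow> complex mat \<Rightarrow> bool" where
  "psd_mat n P \<longleftrightarrow> P \<in> carrier_mat n n \<and> adj P = P \<and>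
     (\<forall>x \<in> carrier_vec n. Im (cinner x (P *\<^sub>v x)) = 0 \<and> Re (cinner x (P *\<^sub>v x)) \<ge> 0)"

definition mat_abs :: "complex mat \<Rightarrow> complex mat" where
  "mat_abs A = (THE P. psd_mat (dim_col A) P \<and> P * P = adj A * A)"

definition singular_values :: "complex mat \<Rightarrow> real list" where
  "singular_values A = rev (sorted_list_of_multiset (image_mset Re (proots (char_poly (mat_abs A)))))"

(* s_i(A), 1-based index: s_1(A) \<ge> s_2(A) \<ge> ... \<ge> s_n(A) *)
definition sing_val :: "complex mat \<Rightarrow> nat \<Rightarrow> real" where
  "sing_val A i = singular_values A ! (i - 1)"

definition ky_fan_norm :: "nat \<Rightarrow> complex mat \<Rightarrow> real" where
  "ky_fan_norm k X = (\<Sum>i = 1..k. sing_val X i)"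

end

theory Submission
  imports Defs
begin


definition lc :: "nat \<Rightarrow> nat \<Rightarrow> (nat \<Rightarrow> complex) \<Rightarrow> (nat \<Rightarrow> complex vec) \<Rightarrow> complex vec" where
  "lc n m c e = vec n (\<lambda>a. \<Sum>j<m. c j * (e j $ a))"

definition orthonormal :: "nat \<Rightarrow> nat \<Rightarrow> (nat \<Rightarrow> complex vec) \<Rightarrow> bool" where
  "orthonormal n m e \<longleftrightarrow> (\<forall>i<m. e i \<in> carrier_vec n) \<and>
     (\<forall>i<m. \<forall>j<m. cinner (e i) (e j) = (if i = j then 1 else 0))"

definition hermitian :: "nat \<Rightarrow> complex mat \<Rightarrow> bool" where
  "hermitian n H \<longleftrightarrow> H \<in> carrier_mat n n \<and>
     (\<forall>x\<in>carrier_vec n. \<forall>y\<in>carrier_vec n. cinner x (H *\<^sub>v y) = cinner (H *\<^sub>v x) y)"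

lemma cinner_sum: "x \<in> carrier_vec n \<Longrightarrow> y \<in> carrier_vec n \<Longrightarrow>
   cinner x y = (\<Sum>i<n. cnj (x$i) * y$i)"
  unfolding cinner_def scalar_prod_def by (auto intro!: sum.cong simp: lessThan_atLeast0)

lemma cinner_swap: "x \<in> carrier_vec n \<Longrightarrow> y \<in> carrier_vec n \<Longrightarrow> cinner y x = cnj (cinner x y)"
  by (simp add: cinner_sum[of _ n] mult.commute)

lemma cinner_add_right: "x \<in> carrier_vec n \<Longrightarrow> y \<in> carrier_vec n \<Longrightarrow> z \<in> carrier_vec n \<Longrightarrow>
   cinner x (y + z) = cinner x y + cinner x z"
  by (simp add: cinner_sum[of _ n] distrib_left sum.distrib)

lemma cinner_minus_right: "x \<in> carrier_vec n \<Longrightarrow> y \<in> carrier_vec n \<Longrightarrow> z \<in> carrier_vec n \<Longrightarrow>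
   cinner x (y - z) = cinner x y - cinner x z"
  by (simp add: cinner_sum[of _ n] right_diff_distrib sum_subtractf)

lemma cinner_add_left: "x \<in> carrier_vec n \<Longrightarrow> y \<in> carrier_vec n \<Longrightarrow> z \<in> carrier_vec n \<Longrightarrow>
   cinner (y + z) x = cinner y x + cinner z x"
  by (simp add: cinner_sum[of _ n] distrib_right sum.distrib)

lemma cinner_minus_left: "x \<in> carrier_vec n \<Longrightarrow> y \<in> carrier_vec n \<Longrightarrow> z \<in> carrier_vec n \<Longrightarrow>
   cinner (y - z) x = cinner y x - cinner z x"
  by (simp add: cinner_sum[of _ n] left_diff_distrib sum_subtractf)

lemma cinner_smult_right: "x \<in> carrier_vec n \<Longrightarrow> y \<in> carrier_vec n \<Longrightarrow>
   cinner x (a \<cdot>\<^sub>v y) = a * cinner x y"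
  by (simp add: cinner_sum[of _ n] sum_distrib_left algebra_simps)

lemma cinner_smult_left: "x \<in> carrier_vec n \<Longrightarrow> y \<in> carrier_vec n \<Longrightarrow>
   cinner (a \<cdot>\<^sub>v x) y = cnj a * cinner x y"
  by (simp add: cinner_sum[of _ n] sum_distrib_left algebra_simps)

lemma cinner_self: assumes "x \<in> carrier_vec n" shows "cinner x x = of_real (\<Sum>i<n. (cmod (x$i))\<^sup>2)"
proof -
  have "\<And>z::complex. cnj z * z = of_real ((cmod z)\<^sup>2)" using complex_norm_square by (metis mult.commute)
  thus ?thesis by (simp only: cinner_sum[OF assms assms] of_real_sum)
qed

lemma cinner_self_Re: "x \<in> carrier_vec n \<Longrightarrow> cinner x x = of_real (Re (cinner x x)) \<and> Re (cinner x x) \<ge> 0"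
  by (simp add: cinner_self[of _ n] sum_nonneg)

lemma cinner_self_zero: assumes "x \<in> carrier_vec n" "cinner x x = 0" shows "x = 0\<^sub>v n"
proof -
  have "complex_of_real (\<Sum>i<n. (cmod (x$i))\<^sup>2) = 0" using assms cinner_self[of x n] by metis
  hence "(\<Sum>i<n. (cmod (x$i))\<^sup>2) = 0" by (simp only: of_real_eq_0_iff)
  hence "\<forall>i\<in>{..<n}. (cmod (x$i))\<^sup>2 = 0" by (subst sum_nonneg_eq_0_iff[symmetric]) auto
  thus ?thesis using assms(1) by (auto intro!: eq_vecI)
qed

lemma cinner_zero_right[simp]: "x \<in> carrier_vec n \<Longrightarrow> cinner x (0\<^sub>v n) = 0"
  by (simp add: cinner_sum[of _ n])

lemma cinner_zero_left[simp]: "x \<in> carrier_vec n \<Longrightarrow> cinner (0\<^sub>v n) x = 0"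
  by (simp add: cinner_sum[of _ n])

lemma index_adj: "A \<in> carrier_mat n m \<Longrightarrow> i < m \<Longrightarrow> j < n \<Longrightarrow> adj A $$ (i,j) = cnj (A $$ (j,i))"
  unfolding mat_adjoint_def by (simp add: mat_of_rows_index)

lemma adj_carrier: "A \<in> carrier_mat n m \<Longrightarrow> adj A \<in> carrier_mat m n"
  unfolding mat_adjoint_def carrier_mat_def by simp

lemma mat_cinner: assumes A: "A \<in> carrier_mat n n" and x: "x \<in> carrier_vec n" and y: "y \<in> carrier_vec n"
  shows "cinner x (A *\<^sub>v y) = cinner (adj A *\<^sub>v x) y"
proof -
  have c1: "A *\<^sub>v y \<in> carrier_vec n" "adj A *\<^sub>v x \<in> carrier_vec n" using A adj_carrier[OF A] x y by auto
  have "cinner x (A *\<^sub>v y) = (\<Sum>i<n. cnj (x$i) * (\<Sum>j<n. A $$ (i,j) * y $ j))"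
    using A x y by (simp add: cinner_sum[OF x c1(1)] scalar_prod_def lessThan_atLeast0)
  also have "\<dots> = (\<Sum>i<n. \<Sum>j<n. cnj (x$i) * A $$ (i,j) * y $ j)"
    by (simp add: sum_distrib_left mult.assoc)
  also have "\<dots> = (\<Sum>j<n. \<Sum>i<n. cnj (x$i) * A $$ (i,j) * y $ j)" by (rule sum.swap)
  also have "\<dots> = (\<Sum>j<n. (\<Sum>i<n. cnj (x$i) * A $$ (i,j)) * y $ j)"
    by (simp add: sum_distrib_right)
  also have "\<dots> = (\<Sum>j<n. cnj (\<Sum>i<n. adj A $$ (j,i) * x $ i) * y $ j)"
    using A by (auto intro!: sum.cong simp: index_adj[OF A] mult.commute)
  also have "\<dots> = cinner (adj A *\<^sub>v x) y"
    using A adj_carrier[OF A] x y by (simp add: cinner_sum[OF c1(2) y] scalar_prod_def lessThan_atLeast0)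
  finally show ?thesis .
qed

lemma lc_carrier[simp]: "lc n m c e \<in> carrier_vec n"
  unfolding lc_def by simp

lemma dim_lc[simp]: "dim_vec (lc n m c e) = n"
  unfolding lc_def by simp

lemma lc_index: "a < n \<Longrightarrow> lc n m c e $ a = (\<Sum>j<m. c j * (e j $ a))"
  unfolding lc_def by simp

lemma cinner_lc_right: assumes x: "x \<in> carrier_vec n" and e: "\<forall>j<m. e j \<in> carrier_vec n"
  shows "cinner x (lc n m c e) = (\<Sum>j<m. c j * cinner x (e j))"
proof -
  have "cinner x (lc n m c e) = (\<Sum>i<n. cnj (x$i) * (\<Sum>j<m. c j * (e j $ i)))"
    by (simp add: cinner_sum[OF x lc_carrier] lc_index)
  also have "\<dots> = (\<Sum>i<n. \<Sum>j<m. c j * (cnj (x$i) * (e j $ i)))"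
    by (simp add: sum_distrib_left mult.left_commute)
  also have "\<dots> = (\<Sum>j<m. \<Sum>i<n. c j * (cnj (x$i) * (e j $ i)))" by (rule sum.swap)
  also have "\<dots> = (\<Sum>j<m. c j * cinner x (e j))"
    using e by (auto simp: cinner_sum[OF x] sum_distrib_left intro!: sum.cong)
  finally show ?thesis .
qed

lemma cinner_lc_left: assumes x: "x \<in> carrier_vec n" and e: "\<forall>j<m. e j \<in> carrier_vec n"
  shows "cinner (lc n m c e) x = (\<Sum>j<m. cnj (c j) * cinner (e j) x)"
proof -
  have "cinner (lc n m c e) x = cnj (cinner x (lc n m c e))" using cinner_swap[OF x lc_carrier] .
  also have "\<dots> = (\<Sum>j<m. cnj (c j) * cnj (cinner x (e j)))" using cinner_lc_right[OF x e] by simp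
  also have "\<dots> = (\<Sum>j<m. cnj (c j) * cinner (e j) x)"
    using e x by (auto intro!: sum.cong simp: cinner_swap[OF x])
  finally show ?thesis .
qed

lemma mat_lc: assumes A: "A \<in> carrier_mat n n" and e: "\<forall>j<m. e j \<in> carrier_vec n"
  shows "A *\<^sub>v lc n m c e = lc n m c (\<lambda>j. A *\<^sub>v e j)"
proof (rule eq_vecI)
  show "dim_vec (A *\<^sub>v lc n m c e) = dim_vec (lc n m c (\<lambda>j. A *\<^sub>v e j))" using A by (simp add: lc_def)
  fix a assume "a < dim_vec (lc n m c (\<lambda>j. A *\<^sub>v e j))"
  hence a: "a < n" by (simp add: lc_def)
  have "(A *\<^sub>v lc n m c e) $ a = (\<Sum>b<n. A $$ (a,b) * (\<Sum>j<m. c j * (e j $ b)))"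
    using A a by (auto simp: scalar_prod_def lessThan_atLeast0 lc_index intro!: sum.cong)
  also have "\<dots> = (\<Sum>b<n. \<Sum>j<m. c j * (A $$ (a,b) * (e j $ b)))"
    by (simp add: sum_distrib_left mult.left_commute)
  also have "\<dots> = (\<Sum>j<m. \<Sum>b<n. c j * (A $$ (a,b) * (e j $ b)))" by (rule sum.swap)
  also have "\<dots> = lc n m c (\<lambda>j. A *\<^sub>v e j) $ a"
    using A a e by (auto simp: lc_index scalar_prod_def lessThan_atLeast0 sum_distrib_left intro!: sum.cong)
  finally show "(A *\<^sub>v lc n m c e) $ a = lc n m c (\<lambda>j. A *\<^sub>v e j) $ a" .
qed

lemma orthonormal_carrier: "orthonormal n m e \<Longrightarrow> j < m \<Longrightarrow> e j \<in> carrier_vec n"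
  unfolding orthonormal_def by auto

lemma orthonormal_inner: "orthonormal n m e \<Longrightarrow> i < m \<Longrightarrow> j < m \<Longrightarrow>
   cinner (e i) (e j) = (if i = j then 1 else 0)"
  unfolding orthonormal_def by auto

lemma orthonormal_coeff: assumes o: "orthonormal n m e" and i: "i < m"
  shows "cinner (e i) (lc n m c e) = c i"
proof -
  have "cinner (e i) (lc n m c e) = (\<Sum>j<m. c j * (if i = j then 1 else 0))"
    using o i by (simp add: cinner_lc_right[of _ n] orthonormal_carrier orthonormal_inner)
  also have "\<dots> = c i" using i by (simp add: if_distrib cong: if_cong)
  finally show ?thesis .
qed

lemma lc_norm: assumes o: "orthonormal n m e"
  shows "cinner (lc n m c e) (lc n m c e) = (\<Sum>j<m. cnj (c j) * c j)"
  using o by (simp add: cinner_lc_left[of _ n] orthonormal_carrier orthonormal_coeff)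



lemma sum_delta_mult: assumes "(a::nat) < n" shows "(\<Sum>b<n. f b * (if b = a then 1 else 0)) = (f a :: complex)"
proof -
  have "(\<Sum>b<n. f b * (if b = a then 1 else 0)) = (\<Sum>b<n. if b = a then f b else 0)"
    by (rule sum.cong) auto
  thus ?thesis using assms by simp
qed

lemma sum_delta_mult': assumes "(a::nat) < n" shows "(\<Sum>b<n. (if a = b then 1 else 0) * f b) = (f a :: complex)"
proof -
  have "(\<Sum>b<n. (if a = b then 1 else 0) * f b) = (\<Sum>b<n. if a = b then f b else 0)"
    by (rule sum.cong) auto
  thus ?thesis using assms by simp
qed

definition basis_mat :: "nat \<Rightarrow> (nat \<Rightarrow> complex vec) \<Rightarrow> complex mat" where
  "basis_mat n e = mat n n (\<lambda>(a,j). e j $ a)"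

lemma basis_mat_carrier[simp]: "basis_mat n e \<in> carrier_mat n n"
  "dim_row (basis_mat n e) = n" "dim_col (basis_mat n e) = n"
  unfolding basis_mat_def by simp_all

lemma adj_basis_mat: "adj (basis_mat n e) = mat n n (\<lambda>(j,a). cnj (e j $ a))"
proof (rule eq_matI)
  have c: "adj (basis_mat n e) \<in> carrier_mat n n" by (rule adj_carrier) simp
  show "dim_row (adj (basis_mat n e)) = dim_row (mat n n (\<lambda>(j, a). cnj (e j $ a)))"
    "dim_col (adj (basis_mat n e)) = dim_col (mat n n (\<lambda>(j, a). cnj (e j $ a)))" using c by auto
  fix i j assume "i < dim_row (mat n n (\<lambda>(j, a). cnj (e j $ a)))" "j < dim_col (mat n n (\<lambda>(j, a). cnj (e j $ a)))"
  thus "adj (basis_mat n e) $$ (i, j) = mat n n (\<lambda>(j, a). cnj (e j $ a)) $$ (i, j)"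
    by (simp add: index_adj[of _ n n] basis_mat_def)
qed

lemma basis_mat_unitary: assumes o: "orthonormal n n e"
  shows "adj (basis_mat n e) * basis_mat n e = 1\<^sub>m n" "basis_mat n e * adj (basis_mat n e) = 1\<^sub>m n"
proof -
  show 1: "adj (basis_mat n e) * basis_mat n e = 1\<^sub>m n"
  proof (rule eq_matI)
    fix i j assume i: "i < dim_row (1\<^sub>m n :: complex mat)" and j: "j < dim_col (1\<^sub>m n :: complex mat)"
    have "(adj (basis_mat n e) * basis_mat n e) $$ (i,j) = (\<Sum>a<n. cnj (e i $ a) * e j $ a)"
      unfolding adj_basis_mat using i j by (auto simp: basis_mat_def scalar_prod_def lessThan_atLeast0 intro!: sum.cong)
    also have "\<dots> = cinner (e i) (e j)" using o i j
      by (simp add: cinner_sum[of _ n] orthonormal_carrier)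
    also have "\<dots> = 1\<^sub>m n $$ (i,j)" using o i j by (simp add: orthonormal_inner)
    finally show "(adj (basis_mat n e) * basis_mat n e) $$ (i,j) = 1\<^sub>m n $$ (i,j)" .
  qed (auto simp: adj_basis_mat)
  show "basis_mat n e * adj (basis_mat n e) = 1\<^sub>m n"
    by (rule mat_mult_left_right_inverse[OF _ _ 1]) (auto simp: adj_basis_mat)
qed

lemma basis_expand: assumes o: "orthonormal n n e" and x: "x \<in> carrier_vec n"
  shows "x = lc n n (\<lambda>j. cinner (e j) x) e"
proof -
  let ?Q = "basis_mat n e"
  have aQ: "adj ?Q \<in> carrier_mat n n" by (simp add: adj_basis_mat)
  have "x = (?Q * adj ?Q) *\<^sub>v x" using basis_mat_unitary[OF o] x by simp
  also have "\<dots> = ?Q *\<^sub>v (adj ?Q *\<^sub>v x)" using aQ x by (simp add: assoc_mult_mat_vec[of _ n n _ n])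
  also have "\<dots> = lc n n (\<lambda>j. cinner (e j) x) e"
  proof (rule eq_vecI)
    fix a assume "a < dim_vec (lc n n (\<lambda>j. cinner (e j) x) e)"
    hence a: "a < n" by simp
    have "(?Q *\<^sub>v (adj ?Q *\<^sub>v x)) $ a = (\<Sum>j<n. e j $ a * (adj ?Q *\<^sub>v x) $ j)"
      using a aQ by (auto simp: basis_mat_def scalar_prod_def lessThan_atLeast0 intro!: sum.cong)
    also have "\<dots> = (\<Sum>j<n. e j $ a * cinner (e j) x)"
      using a x o by (auto simp: adj_basis_mat scalar_prod_def lessThan_atLeast0 cinner_sum[of _ n]
          orthonormal_carrier intro!: sum.cong)
    also have "\<dots> = lc n n (\<lambda>j. cinner (e j) x) e $ a" using a by (simp add: lc_index mult.commute)
    finally show "(?Q *\<^sub>v (adj ?Q *\<^sub>v x)) $ a = lc n n (\<lambda>j. cinner (e j) x) e $ a" .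
  qed (simp add: aQ)
  finally show ?thesis .
qed

lemma coeff_eq: assumes o: "orthonormal n n e" and x: "x \<in> carrier_vec n" and y: "y \<in> carrier_vec n"
  and eq: "\<And>j. j < n \<Longrightarrow> cinner (e j) x = cinner (e j) y"
  shows "x = y"
proof -
  have "x = lc n n (\<lambda>j. cinner (e j) x) e" by (rule basis_expand[OF o x])
  also have "\<dots> = lc n n (\<lambda>j. cinner (e j) y) e" unfolding lc_def using eq by (auto intro!: sum.cong)
  also have "\<dots> = y" by (rule basis_expand[OF o y, symmetric])
  finally show ?thesis .
qed

lemma parseval: assumes o: "orthonormal n n e" and x: "x \<in> carrier_vec n" and y: "y \<in> carrier_vec n"
  shows "cinner x y = (\<Sum>j<n. cinner x (e j) * cinner (e j) y)"
proof -
  have "cinner x y = cinner x (lc n n (\<lambda>j. cinner (e j) y) e)" using basis_expand[OF o y] by simp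
  also have "\<dots> = (\<Sum>j<n. cinner (e j) y * cinner x (e j))"
    using o x by (simp add: cinner_lc_right orthonormal_carrier)
  finally show ?thesis by (simp add: mult.commute)
qed

lemma parseval_norm: assumes o: "orthonormal n n e" and x: "x \<in> carrier_vec n"
  shows "cinner x x = (\<Sum>j<n. cnj (cinner (e j) x) * cinner (e j) x)"
proof -
  have "\<And>j. j < n \<Longrightarrow> cinner x (e j) = cnj (cinner (e j) x)"
    using o x by (intro cinner_swap) (auto simp: orthonormal_carrier)
  thus ?thesis using parseval[OF o x x] by simp
qed

lemma orthonormal_mono: "orthonormal n m v \<Longrightarrow> k \<le> m \<Longrightarrow> orthonormal n k v"
  unfolding orthonormal_def by auto

definition resid :: "nat \<Rightarrow> nat \<Rightarrow> (nat \<Rightarrow> complex vec) \<Rightarrow> complex vec \<Rightarrow> complex vec" where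
  "resid n m v x = x - lc n m (\<lambda>i. cinner (v i) x) v"

lemma resid_carrier: "x \<in> carrier_vec n \<Longrightarrow> resid n m v x \<in> carrier_vec n"
  unfolding resid_def by simp

lemma resid_orth: assumes o: "orthonormal n m v" and x: "x \<in> carrier_vec n" and i: "i < m"
  shows "cinner (v i) (resid n m v x) = 0"
  unfolding resid_def using o x i
  by (simp add: cinner_minus_right[of _ n] orthonormal_carrier orthonormal_coeff)

lemma resid_norm: assumes o: "orthonormal n m v" and x: "x \<in> carrier_vec n"
  shows "cinner (resid n m v x) (resid n m v x) = cinner x x - (\<Sum>i<m. cnj (cinner (v i) x) * cinner (v i) x)"
proof -
  let ?z = "resid n m v x" and ?l = "lc n m (\<lambda>i. cinner (v i) x) v"
  have z: "?z \<in> carrier_vec n" using x by (rule resid_carrier)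
  have vc: "\<forall>j<m. v j \<in> carrier_vec n" using o by (simp add: orthonormal_carrier)
  have "\<And>j. j < m \<Longrightarrow> cinner ?z (v j) = 0"
    using resid_orth[OF o x] z vc by (metis cinner_swap complex_cnj_zero)
  hence zl: "cinner ?z ?l = 0"
    using z vc by (simp add: cinner_lc_right)
  have "cinner ?z ?z = cinner ?z x - cinner ?z ?l"
    by (subst (2) resid_def) (simp add: cinner_minus_right[OF z x lc_carrier])
  also have "\<dots> = cinner ?z x" using zl by simp
  also have "\<dots> = cinner x x - cinner ?l x"
    by (subst resid_def) (simp add: cinner_minus_left[OF x x lc_carrier])
  also have "cinner ?l x = (\<Sum>i<m. cnj (cinner (v i) x) * cinner (v i) x)"
    using x vc by (simp add: cinner_lc_left)
  finally show ?thesis .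
qed

lemma bessel: assumes o: "orthonormal n m v" and x: "x \<in> carrier_vec n"
  shows "(\<Sum>i<m. (cmod (cinner (v i) x))\<^sup>2) \<le> Re (cinner x x)"
proof -
  let ?z = "resid n m v x"
  have ge: "Re (cinner ?z ?z) \<ge> 0" using cinner_self_Re[OF resid_carrier[OF x]] by simp
  have "\<And>z::complex. cnj z * z = of_real ((cmod z)\<^sup>2)" using complex_norm_square by (metis mult.commute)
  hence "(\<Sum>i<m. cnj (cinner (v i) x) * cinner (v i) x) = of_real (\<Sum>i<m. (cmod (cinner (v i) x))\<^sup>2)"
    by (simp only: of_real_sum)
  moreover have "Re (cinner ?z ?z) = Re (cinner x x) - Re (\<Sum>i<m. cnj (cinner (v i) x) * cinner (v i) x)"
    using resid_norm[OF o x] by simp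
  ultimately have "Re (cinner ?z ?z) = Re (cinner x x) - (\<Sum>i<m. (cmod (cinner (v i) x))\<^sup>2)"
    by (metis Re_complex_of_real)
  thus ?thesis using ge by simp
qed

lemma cinner_unit_vec: "x \<in> carrier_vec n \<Longrightarrow> a < n \<Longrightarrow> cinner x (unit_vec n a) = cnj (x $ a)"
  by (simp add: cinner_sum[of _ n] sum_delta_mult)

lemma normalize_vec: assumes z: "z \<in> carrier_vec n" and nz: "z \<noteq> 0\<^sub>v n"
  shows "\<exists>x\<in>carrier_vec n. cinner x x = 1 \<and> (\<exists>s. x = s \<cdot>\<^sub>v z)"
proof -
  let ?r = "Re (cinner z z)"
  have r: "cinner z z = of_real ?r" "?r \<ge> 0" using cinner_self_Re[OF z] by auto
  have "?r \<noteq> 0" using cinner_self_zero[OF z] nz r(1) by force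
  hence rp: "?r > 0" using r(2) by simp
  let ?s = "complex_of_real (1 / sqrt ?r)"
  have "cinner (?s \<cdot>\<^sub>v z) (?s \<cdot>\<^sub>v z) = cnj ?s * ?s * cinner z z"
    using z by (simp add: cinner_smult_left[of _ n] cinner_smult_right[of _ n])
  also have "\<dots> = of_real ((1 / sqrt ?r) * (1 / sqrt ?r) * ?r)"
    by (subst r(1)) (simp only: complex_cnj_complex_of_real of_real_mult)
  also have "(1 / sqrt ?r) * (1 / sqrt ?r) * ?r = 1"
  proof -
    have "sqrt ?r * sqrt ?r = ?r" using rp by simp
    thus ?thesis using rp by (simp add: field_simps)
  qed
  finally show ?thesis using z by (intro bexI[of _ "?s \<cdot>\<^sub>v z"]) auto
qed

lemma orth_exists: assumes o: "orthonormal n m v" and mn: "m < n"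
  shows "\<exists>x\<in>carrier_vec n. cinner x x = 1 \<and> (\<forall>i<m. cinner (v i) x = 0)"
proof (cases "\<exists>a<n. resid n m v (unit_vec n a) \<noteq> 0\<^sub>v n")
  case True
  then obtain a where a: "a < n" and nz: "resid n m v (unit_vec n a) \<noteq> 0\<^sub>v n" by auto
  let ?z = "resid n m v (unit_vec n a)"
  have z: "?z \<in> carrier_vec n" by (rule resid_carrier) simp
  from normalize_vec[OF z nz] obtain x s where x: "x \<in> carrier_vec n" "cinner x x = 1" "x = s \<cdot>\<^sub>v ?z"
    by auto
  have "\<forall>i<m. cinner (v i) x = 0"
    using x(3) resid_orth[OF o _] z o by (simp add: cinner_smult_right[of _ n] orthonormal_carrier)
  thus ?thesis using x by auto
next
  case False
  have vc: "\<And>i. i < m \<Longrightarrow> v i \<in> carrier_vec n" using o by (simp add: orthonormal_carrier)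
  have eq: "(1::complex) = (\<Sum>i<m. cnj (v i $ a) * v i $ a)" if a: "a < n" for a
  proof -
    have "cinner (resid n m v (unit_vec n a)) (resid n m v (unit_vec n a)) = 0" using False a by simp
    hence "cinner (unit_vec n a) (unit_vec n a) = (\<Sum>i<m. cnj (cinner (v i) (unit_vec n a)) * cinner (v i) (unit_vec n a))"
      using resid_norm[OF o, of "unit_vec n a"] by simp
    moreover have "cinner (unit_vec n a) (unit_vec n a) = 1" using a by (simp add: cinner_unit_vec)
    ultimately show ?thesis using a vc by (simp add: cinner_unit_vec mult.commute)
  qed
  have "(of_nat n :: complex) = (\<Sum>a<n. 1)" by simp
  also have "\<dots> = (\<Sum>a<n. \<Sum>i<m. cnj (v i $ a) * v i $ a)" using eq by (intro sum.cong) auto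
  also have "\<dots> = (\<Sum>i<m. \<Sum>a<n. cnj (v i $ a) * v i $ a)" by (rule sum.swap)
  also have "\<dots> = (\<Sum>i<m. cinner (v i) (v i))" using vc by (simp add: cinner_sum[of _ n])
  also have "\<dots> = of_nat m" using o by (simp add: orthonormal_inner)
  finally have "n = m" by simp
  with mn show ?thesis by simp
qed

lemma orthonormal_extend1: assumes o: "orthonormal n m v" and x: "x \<in> carrier_vec n"
  and xx: "cinner x x = 1" and ox: "\<forall>i<m. cinner (v i) x = 0"
  shows "orthonormal n (Suc m) (v(m := x))"
  unfolding orthonormal_def
proof (intro conjI allI impI)
  fix i assume "i < Suc m" thus "(v(m := x)) i \<in> carrier_vec n" using o x by (auto simp: orthonormal_carrier)
next
  fix i j assume i: "i < Suc m" and j: "j < Suc m"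
  have c: "\<And>i. i < m \<Longrightarrow> v i \<in> carrier_vec n" using o by (simp add: orthonormal_carrier)
  have ox': "\<And>j. j < m \<Longrightarrow> cinner x (v j) = 0"
    using ox c x by (metis cinner_swap complex_cnj_zero)
  show "cinner ((v(m := x)) i) ((v(m := x)) j) = (if i = j then 1 else 0)"
    using i j o ox xx c ox'
    by (auto simp: less_Suc_eq orthonormal_inner)
qed

lemma orthonormal_extend: assumes o: "orthonormal n m v" and mn: "m \<le> n"
  shows "\<exists>w. orthonormal n n w \<and> (\<forall>i<m. w i = v i)"
  using o mn
proof (induction "n - m" arbitrary: m v)
  case 0
  hence "m = n" by simp
  thus ?case using 0 by auto
next
  case (Suc d)
  hence mn: "m < n" by simp
  from orth_exists[OF Suc.prems(1) mn] obtain x where x: "x \<in> carrier_vec n" "cinner x x = 1"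
    "\<forall>i<m. cinner (v i) x = 0" by auto
  have o': "orthonormal n (Suc m) (v(m := x))" by (rule orthonormal_extend1[OF Suc.prems(1) x])
  have "d = n - Suc m" using Suc.hyps(2) by simp
  from Suc.hyps(1)[OF this o'] mn
  obtain w where "orthonormal n n w" "\<forall>i<Suc m. w i = (v(m := x)) i" by auto
  thus ?case by (intro exI[of _ w]) auto
qed

lemma unitary_cinner: assumes U: "unitary_mat n U" and x: "x \<in> carrier_vec n" and y: "y \<in> carrier_vec n"
  shows "cinner (U *\<^sub>v x) (U *\<^sub>v y) = cinner x y"
proof -
  have Uc: "U \<in> carrier_mat n n" and UU: "adj U * U = 1\<^sub>m n" using U unfolding unitary_mat_def by auto
  have "cinner (U *\<^sub>v x) (U *\<^sub>v y) = cinner (adj U *\<^sub>v (U *\<^sub>v x)) y"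
    using Uc x y by (simp add: mat_cinner)
  also have "adj U *\<^sub>v (U *\<^sub>v x) = (adj U * U) *\<^sub>v x"
    using Uc adj_carrier[OF Uc] x by (simp add: assoc_mult_mat_vec[of _ n n _ n])
  finally show ?thesis using UU x by simp
qed

lemma unitary_orthonormal: assumes U: "unitary_mat n U" and o: "orthonormal n m v"
  shows "orthonormal n m (\<lambda>i. U *\<^sub>v v i)"
  using U o unfolding orthonormal_def
  by (auto simp: unitary_cinner[OF U] unitary_mat_def)



lemma orthonormal_shift: "orthonormal n n w \<Longrightarrow> m \<le> n \<Longrightarrow> orthonormal n (n - m) (\<lambda>b. w (m + b))"
  unfolding orthonormal_def by auto

lemma herm_eig_in_complement:
  assumes H: "hermitian n H" and o: "orthonormal n m v"
    and ev: "\<forall>i<m. H *\<^sub>v v i = lam i \<cdot>\<^sub>v v i" and mn: "m < n"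
  shows "\<exists>x\<in>carrier_vec n. cinner x x = 1 \<and> (\<forall>i<m. cinner (v i) x = 0) \<and>
           (\<exists>\<mu>::real. H *\<^sub>v x = of_real \<mu> \<cdot>\<^sub>v x)"
proof -
  have Hc: "H \<in> carrier_mat n n" and Hh: "\<And>x y. x \<in> carrier_vec n \<Longrightarrow> y \<in> carrier_vec n \<Longrightarrow>
     cinner x (H *\<^sub>v y) = cinner (H *\<^sub>v x) y" using H unfolding hermitian_def by auto
  obtain w where w: "orthonormal n n w" and wv: "\<forall>i<m. w i = v i"
    using orthonormal_extend[OF o] mn by fastforce
  have wc: "\<And>j. j < n \<Longrightarrow> w j \<in> carrier_vec n" using w by (simp add: orthonormal_carrier)
  define d where "d = n - m"
  have d0: "d > 0" using mn d_def by simp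
  define W where "W = (\<lambda>b. w (m + b))"
  have oW: "orthonormal n d W" unfolding W_def d_def using orthonormal_shift[OF w] mn by simp
  have Wc: "\<forall>b<d. W b \<in> carrier_vec n" using oW by (simp add: orthonormal_carrier)
  define C where "C = mat d d (\<lambda>(a,b). cinner (W a) (H *\<^sub>v W b))"
  have Cc: "C \<in> carrier_mat d d" unfolding C_def by simp
  obtain as where as: "char_poly C = (\<Prod>a\<leftarrow>as. [:- a, 1:])" "length as = d"
    using char_poly_factorized[OF Cc] by auto
  then obtain a0 rest where asc: "as = a0 # rest" using d0 by (cases as) auto
  have "poly (char_poly C) a0 = 0" unfolding as(1) asc by simp
  hence "eigenvalue C a0" using eigenvalue_root_char_poly[OF Cc] by simp
  then obtain c where c: "c \<in> carrier_vec d" "c \<noteq> 0\<^sub>v d" "C *\<^sub>v c = a0 \<cdot>\<^sub>v c"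
    unfolding eigenvalue_def eigenvector_def using Cc by auto
  define x0 where "x0 = lc n d (\<lambda>b. c $ b) W"
  have x0c: "x0 \<in> carrier_vec n" unfolding x0_def by simp
  have Hx0: "H *\<^sub>v x0 \<in> carrier_vec n" using Hc x0c by simp
  have orth0: "cinner (v j) x0 = 0" if j: "j < m" for j
  proof -
    have vj: "v j \<in> carrier_vec n" using o j by (simp add: orthonormal_carrier)
    have "cinner (v j) x0 = (\<Sum>b<d. c $ b * cinner (v j) (W b))"
      unfolding x0_def using vj Wc by (simp add: cinner_lc_right)
    also have "\<dots> = 0"
    proof (intro sum.neutral ballI)
      fix b assume "b \<in> {..<d}"
      hence "m + b < n" "j \<noteq> m + b" "j < n" using j d_def mn by auto
      hence "cinner (w j) (w (m + b)) = 0" by (simp add: orthonormal_inner[OF w])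
      thus "c $ b * cinner (v j) (W b) = 0" using wv j unfolding W_def by simp
    qed
    finally show ?thesis .
  qed
  have coefW: "cinner (W a) x0 = c $ a" if a: "a < d" for a
    unfolding x0_def using orthonormal_coeff[OF oW a] .
  have Heig: "H *\<^sub>v x0 = a0 \<cdot>\<^sub>v x0"
  proof (rule coeff_eq[OF w Hx0])
    show "a0 \<cdot>\<^sub>v x0 \<in> carrier_vec n" using x0c by simp
    fix j assume j: "j < n"
    show "cinner (w j) (H *\<^sub>v x0) = cinner (w j) (a0 \<cdot>\<^sub>v x0)"
    proof (cases "j < m")
      case True
      have "cinner (w j) (H *\<^sub>v x0) = cinner (H *\<^sub>v v j) x0" using True wv Hh[OF wc[OF j] x0c] by simp
      also have "\<dots> = cnj (lam j) * cinner (v j) x0"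
      proof -
        have "v j \<in> carrier_vec n" using o True by (simp add: orthonormal_carrier)
        thus ?thesis using True ev x0c by (simp add: cinner_smult_left[of _ n])
      qed
      also have "\<dots> = 0" using orth0[OF True] by simp
      also have "\<dots> = cinner (w j) (a0 \<cdot>\<^sub>v x0)" using True wv wc[OF j] x0c orth0
        by (simp add: cinner_smult_right[of _ n])
      finally show ?thesis .
    next
      case False
      define a where "a = j - m"
      have a: "a < d" and ja: "j = m + a" using False j d_def a_def by auto
      have "cinner (w j) (H *\<^sub>v x0) = cinner (W a) (lc n d (\<lambda>b. c $ b) (\<lambda>b. H *\<^sub>v W b))"
        unfolding x0_def W_def ja using mat_lc[OF Hc] Wc unfolding W_def by simp
      also have "\<dots> = (\<Sum>b<d. c $ b * cinner (W a) (H *\<^sub>v W b))"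
        using Wc a Hc by (simp add: cinner_lc_right)
      also have "\<dots> = (C *\<^sub>v c) $ a" using a c(1) Cc
        by (auto simp: C_def scalar_prod_def lessThan_atLeast0 mult.commute intro!: sum.cong)
      also have "\<dots> = a0 * c $ a" using c(3) a c(1) by simp
      also have "\<dots> = cinner (w j) (a0 \<cdot>\<^sub>v x0)" using coefW[OF a] Wc a x0c unfolding ja W_def
        by (simp add: cinner_smult_right[of _ n])
      finally show ?thesis .
    qed
  qed
  have x0nz: "x0 \<noteq> 0\<^sub>v n"
  proof
    assume "x0 = 0\<^sub>v n"
    hence "\<forall>a<d. c $ a = 0" using coefW Wc by (metis cinner_zero_right)
    hence "c = 0\<^sub>v d" using c(1) by (auto intro!: eq_vecI)
    thus False using c(2) by simp
  qed
  from normalize_vec[OF x0c x0nz] obtain x s where x: "x \<in> carrier_vec n" "cinner x x = 1" "x = s \<cdot>\<^sub>v x0"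
    by auto
  have Hx: "H *\<^sub>v x = a0 \<cdot>\<^sub>v x"
    unfolding x(3) using Hc x0c Heig by (simp add: mult_mat_vec[of _ n n] smult_smult_assoc mult.commute)
  have "a0 = cinner x (H *\<^sub>v x)" using Hx x by (simp add: cinner_smult_right[of _ n])
  also have "\<dots> = cinner (H *\<^sub>v x) x" using Hh x by simp
  also have "\<dots> = cnj a0" using Hx x by (simp add: cinner_smult_left[of _ n])
  finally have "a0 = cnj a0" .
  hence "Im a0 = Im (cnj a0)" by (rule arg_cong)
  hence "Im a0 = 0" by simp
  hence "a0 = of_real (Re a0)" by (simp add: complex_eq_iff)
  hence Hx': "H *\<^sub>v x = of_real (Re a0) \<cdot>\<^sub>v x" using Hx by simp
  have "\<forall>i<m. cinner (v i) x = 0" using orth0 x(3) o x0c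
    by (auto simp: cinner_smult_right[of _ n] orthonormal_carrier)
  thus ?thesis using x Hx' by blast
qed

lemma spectral_unsorted: assumes H: "hermitian n H"
  shows "\<exists>v lam. orthonormal n n v \<and> (\<forall>j<n. H *\<^sub>v v j = complex_of_real (lam j) \<cdot>\<^sub>v v j)"
proof -
  have "m \<le> n \<Longrightarrow> \<exists>v lam. orthonormal n m v \<and> (\<forall>j<m. H *\<^sub>v v j = complex_of_real (lam j) \<cdot>\<^sub>v v j)" for m
  proof (induction m)
    case 0
    show ?case by (auto simp: orthonormal_def)
  next
    case (Suc m)
    then obtain v lam where o: "orthonormal n m v" and ev: "\<forall>j<m. H *\<^sub>v v j = complex_of_real (lam j) \<cdot>\<^sub>v v j"
      by auto
    from herm_eig_in_complement[OF H o ev] Suc.prems obtain x \<mu> where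
      x: "x \<in> carrier_vec n" "cinner x x = 1" "\<forall>i<m. cinner (v i) x = 0" "H *\<^sub>v x = of_real \<mu> \<cdot>\<^sub>v x"
      by auto
    have "orthonormal n (Suc m) (v(m := x))" by (rule orthonormal_extend1[OF o x(1-3)])
    moreover have "\<forall>j<Suc m. H *\<^sub>v (v(m := x)) j = complex_of_real ((lam(m := \<mu>)) j) \<cdot>\<^sub>v (v(m := x)) j"
      using ev x(4) by (auto simp: less_Suc_eq)
    ultimately show ?case by blast
  qed
  thus ?thesis by simp
qed

lemma spectral_sorted: assumes H: "hermitian n H"
  shows "\<exists>v lam. orthonormal n n v \<and> (\<forall>j<n. H *\<^sub>v v j = complex_of_real (lam j) \<cdot>\<^sub>v v j) \<and>
     (\<forall>i j. i \<le> j \<longrightarrow> j < n \<longrightarrow> lam j \<le> lam i)"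
proof -
  obtain v lam where o: "orthonormal n n v" and ev: "\<forall>j<n. H *\<^sub>v v j = complex_of_real (lam j) \<cdot>\<^sub>v v j"
    using spectral_unsorted[OF H] by auto
  define js where "js = sort_key (\<lambda>j. - lam j) [0..<n]"
  have ljs: "length js = n" unfolding js_def by simp
  have sjs: "set js = {..<n}" unfolding js_def by auto
  have djs: "distinct js" unfolding js_def by simp
  have sorted: "sorted (map (\<lambda>j. - lam j) js)" unfolding js_def by (rule sorted_sort_key)
  have jslt: "\<And>i. i < n \<Longrightarrow> js ! i < n" using sjs ljs nth_mem by fastforce
  have jsinj: "\<And>i j. i < n \<Longrightarrow> j < n \<Longrightarrow> js ! i = js ! j \<Longrightarrow> i = j"
    using djs ljs nth_eq_iff_index_eq by blast
  define v' where "v' = (\<lambda>i. v (js ! i))"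
  define lam' where "lam' = (\<lambda>i. lam (js ! i))"
  have "orthonormal n n v'" using o jslt jsinj unfolding orthonormal_def v'_def by auto
  moreover have "\<forall>j<n. H *\<^sub>v v' j = complex_of_real (lam' j) \<cdot>\<^sub>v v' j"
    using ev jslt unfolding v'_def lam'_def by auto
  moreover have "\<forall>i j. i \<le> j \<longrightarrow> j < n \<longrightarrow> lam' j \<le> lam' i"
  proof (intro allI impI)
    fix i j assume "i \<le> j" "j < n"
    hence "map (\<lambda>j. - lam j) js ! i \<le> map (\<lambda>j. - lam j) js ! j"
      using sorted ljs by (intro sorted_nth_mono) auto
    thus "lam' j \<le> lam' i" using \<open>i \<le> j\<close> \<open>j < n\<close> ljs unfolding lam'_def by simp
  qed
  ultimately show ?thesis by blast
qed

lemma col_basis_mat: "j < n \<Longrightarrow> e j \<in> carrier_vec n \<Longrightarrow> col (basis_mat n e) j = e j"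
  by (rule eq_vecI) (auto simp: basis_mat_def)

lemma char_poly_eig: assumes Hc: "H \<in> carrier_mat n n" and o: "orthonormal n n v"
  and ev: "\<forall>j<n. H *\<^sub>v v j = lam j \<cdot>\<^sub>v v j"
  shows "char_poly H = (\<Prod>a\<leftarrow>map lam [0..<n]. [:- a, 1:])"
proof -
  let ?Q = "basis_mat n v"
  define D where "D = mat n n (\<lambda>(i,j). if i = j then lam i else 0)"
  have Dc: "D \<in> carrier_mat n n" unfolding D_def by simp
  have aQ: "adj ?Q \<in> carrier_mat n n" by (rule adj_carrier) simp
  have vc: "\<And>j. j < n \<Longrightarrow> v j \<in> carrier_vec n" using o by (simp add: orthonormal_carrier)
  have HQ: "H * ?Q = ?Q * D"
  proof (rule eq_matI)
    fix a j assume a: "a < dim_row (?Q * D)" and j: "j < dim_col (?Q * D)"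
    hence a: "a < n" and j: "j < n" using Dc by auto
    have "(H * ?Q) $$ (a,j) = (H *\<^sub>v v j) $ a"
      using a j Hc vc by (simp add: col_basis_mat)
    also have "\<dots> = lam j * v j $ a"
    proof -
      have "dim_vec (v j) = n" using vc[OF j] by simp
      thus ?thesis using ev j a by simp
    qed
    also have "\<dots> = (?Q * D) $$ (a,j)"
    proof -
      have "(?Q * D) $$ (a,j) = (\<Sum>b<n. v b $ a * (if b = j then lam b else 0))"
        using a j Dc by (auto simp: D_def basis_mat_def scalar_prod_def lessThan_atLeast0 intro!: sum.cong)
      also have "\<dots> = (\<Sum>b<n. if b = j then v b $ a * lam b else 0)" by (rule sum.cong) auto
      also have "\<dots> = v j $ a * lam j" using j by simp
      finally show ?thesis by (simp add: mult.commute)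
    qed
    finally show "(H * ?Q) $$ (a,j) = (?Q * D) $$ (a,j)" .
  qed (use Hc Dc in auto)
  have "H = H * (?Q * adj ?Q)" using basis_mat_unitary[OF o] Hc by simp
  also have "\<dots> = (H * ?Q) * adj ?Q" using Hc aQ by (simp add: assoc_mult_mat[of _ n n _ n _ n])
  also have "\<dots> = ?Q * D * adj ?Q" using HQ by simp
  finally have HQD: "H = ?Q * D * adj ?Q" .
  have "similar_mat_wit H D ?Q (adj ?Q)"
    unfolding similar_mat_wit_def Let_def using Hc Dc aQ basis_mat_unitary[OF o] HQD by auto
  hence "char_poly H = char_poly D" by (intro char_poly_similar) (auto simp: similar_mat_def)
  also have "char_poly D = (\<Prod>a\<leftarrow>diag_mat D. [:- a, 1:])"
    by (rule char_poly_upper_triangular[OF Dc]) (auto simp: upper_triangular_def D_def)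
  also have "diag_mat D = map lam [0..<n]" unfolding diag_mat_def D_def by auto
  finally show ?thesis .
qed

lemma proots_linear_prod: "proots (\<Prod>a\<leftarrow>xs. [:- a, 1:]) = mset (xs :: complex list)"
proof (induction xs)
  case Nil thus ?case by simp
next
  case (Cons x xs)
  have nz: "(\<Prod>a\<leftarrow>xs. [:- a, 1:]) \<noteq> 0" by (auto simp: prod_list_zero_iff)
  have eq: "(\<Prod>a\<leftarrow>x # xs. [:- a, 1:]) = [:- x, 1:] * (\<Prod>a\<leftarrow>xs. [:- a, 1:])" by simp
  have "proots ([:- x, 1:] * (\<Prod>a\<leftarrow>xs. [:- a, 1:])) = proots [:- x, 1:] + proots (\<Prod>a\<leftarrow>xs. [:- a, 1:])"
    using nz by (intro proots_mult) auto
  moreover have "proots [:- x, 1:] = {#x#}" by (metis proots_linear_factor minus_minus)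
  ultimately show ?case using Cons eq by simp
qed



lemma cinner_herm_eig: assumes H: "hermitian n H" and v: "v \<in> carrier_vec n"
  and ev: "H *\<^sub>v v = complex_of_real l \<cdot>\<^sub>v v" and y: "y \<in> carrier_vec n"
  shows "cinner v (H *\<^sub>v y) = of_real l * cinner v y"
proof -
  have "cinner v (H *\<^sub>v y) = cinner (H *\<^sub>v v) y" using H v y unfolding hermitian_def by auto
  also have "\<dots> = of_real l * cinner v y" using ev v y by (simp add: cinner_smult_left[of _ n])
  finally show ?thesis .
qed

lemma adj_adj: assumes "X \<in> carrier_mat n m" shows "adj (adj X) = X"
proof (rule eq_matI)
  have a: "adj X \<in> carrier_mat m n" by (rule adj_carrier[OF assms])
  have aa: "adj (adj X) \<in> carrier_mat n m" by (rule adj_carrier[OF a])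
  show "dim_row (adj (adj X)) = dim_row X" "dim_col (adj (adj X)) = dim_col X" using aa assms by auto
  fix i j assume "i < dim_row X" "j < dim_col X"
  thus "adj (adj X) $$ (i, j) = X $$ (i, j)" using assms a by (simp add: index_adj[OF a] index_adj[OF assms])
qed

lemma cinner_adj: assumes X: "X \<in> carrier_mat n n" and x: "x \<in> carrier_vec n" and y: "y \<in> carrier_vec n"
  shows "cinner x (adj X *\<^sub>v y) = cinner (X *\<^sub>v x) y"
  using mat_cinner[OF adj_carrier[OF X] x y] adj_adj[OF X] by simp

lemma cinner_XX: assumes X: "X \<in> carrier_mat n n" and x: "x \<in> carrier_vec n" and y: "y \<in> carrier_vec n"
  shows "cinner x ((adj X * X) *\<^sub>v y) = cinner (X *\<^sub>v x) (X *\<^sub>v y)"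
proof -
  have "(adj X * X) *\<^sub>v y = adj X *\<^sub>v (X *\<^sub>v y)"
    using X adj_carrier[OF X] y by (simp add: assoc_mult_mat_vec[of _ n n _ n])
  thus ?thesis using cinner_adj[OF X x] X y by simp
qed

lemma adj_hermitian: assumes "P \<in> carrier_mat n n" "adj P = P" shows "hermitian n P"
  unfolding hermitian_def using assms mat_cinner[OF assms(1)] by auto

lemma psd_hermitian: "psd_mat n P \<Longrightarrow> hermitian n P"
  unfolding psd_mat_def by (auto intro: adj_hermitian)

lemma psd_eig_nonneg: assumes P: "psd_mat n P" and v: "v \<in> carrier_vec n" and vv: "cinner v v = 1"
  and ev: "P *\<^sub>v v = complex_of_real l \<cdot>\<^sub>v v"
  shows "l \<ge> 0"
proof -
  have "cinner v (P *\<^sub>v v) = of_real l" using ev v vv by (simp add: cinner_smult_right[of _ n])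
  thus ?thesis using P v unfolding psd_mat_def by force
qed

lemma mat_eq_on_basis: assumes A: "A \<in> carrier_mat n n" and B: "B \<in> carrier_mat n n"
  and o: "orthonormal n n v" and eq: "\<And>j. j < n \<Longrightarrow> A *\<^sub>v v j = B *\<^sub>v v j"
  shows "A = B"
proof -
  have vc: "\<forall>j<n. v j \<in> carrier_vec n" using o by (simp add: orthonormal_carrier)
  have ax: "A *\<^sub>v x = B *\<^sub>v x" if x: "x \<in> carrier_vec n" for x
  proof -
    have "A *\<^sub>v x = A *\<^sub>v lc n n (\<lambda>j. cinner (v j) x) v" using basis_expand[OF o x] by simp
    also have "\<dots> = lc n n (\<lambda>j. cinner (v j) x) (\<lambda>j. A *\<^sub>v v j)" using mat_lc[OF A vc] .
    also have "\<dots> = lc n n (\<lambda>j. cinner (v j) x) (\<lambda>j. B *\<^sub>v v j)" unfolding lc_def using eq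
      by (auto intro!: sum.cong)
    also have "\<dots> = B *\<^sub>v lc n n (\<lambda>j. cinner (v j) x) v" using mat_lc[OF B vc] by simp
    also have "\<dots> = B *\<^sub>v x" using basis_expand[OF o x] by simp
    finally show ?thesis .
  qed
  show ?thesis
  proof (rule eq_matI)
    fix i j assume i: "i < dim_row B" and j: "j < dim_col B"
    have "A $$ (i,j) = (A *\<^sub>v unit_vec n j) $ i" using A B i j by simp
    also have "\<dots> = (B *\<^sub>v unit_vec n j) $ i" using ax[of "unit_vec n j"] by simp
    also have "\<dots> = B $$ (i,j)" using B i j by simp
    finally show "A $$ (i,j) = B $$ (i,j)" .
  qed (use A B in auto)
qed

definition smat :: "nat \<Rightarrow> (nat \<Rightarrow> complex vec) \<Rightarrow> (nat \<Rightarrow> real) \<Rightarrow> complex mat" where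
  "smat n v d = mat n n (\<lambda>(a,b). \<Sum>j<n. of_real (d j) * v j $ a * cnj (v j $ b))"

lemma smat_carrier[simp]: "smat n v d \<in> carrier_mat n n" "dim_row (smat n v d) = n" "dim_col (smat n v d) = n"
  unfolding smat_def by simp_all

lemma lc_cong: "(\<And>j. j < m \<Longrightarrow> c j = c' j) \<Longrightarrow> lc n m c v = lc n m c' v"
  unfolding lc_def by (auto intro!: sum.cong)

lemma smat_mult: assumes vc: "\<forall>j<n. v j \<in> carrier_vec n" and x: "x \<in> carrier_vec n"
  shows "smat n v d *\<^sub>v x = lc n n (\<lambda>j. of_real (d j) * cinner (v j) x) v"
proof (rule eq_vecI)
  fix a assume "a < dim_vec (lc n n (\<lambda>j. of_real (d j) * cinner (v j) x) v)"
  hence a: "a < n" by simp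
  have "(smat n v d *\<^sub>v x) $ a = (\<Sum>b<n. (\<Sum>j<n. of_real (d j) * v j $ a * cnj (v j $ b)) * x $ b)"
    using a x by (auto simp: smat_def scalar_prod_def lessThan_atLeast0 intro!: sum.cong)
  also have "\<dots> = (\<Sum>b<n. \<Sum>j<n. of_real (d j) * v j $ a * (cnj (v j $ b) * x $ b))"
    by (simp add: sum_distrib_right mult.assoc)
  also have "\<dots> = (\<Sum>j<n. \<Sum>b<n. of_real (d j) * v j $ a * (cnj (v j $ b) * x $ b))" by (rule sum.swap)
  also have "\<dots> = (\<Sum>j<n. of_real (d j) * cinner (v j) x * v j $ a)"
    using vc x by (auto simp: cinner_sum[of _ n] sum_distrib_left mult.commute mult.left_commute intro!: sum.cong)
  also have "\<dots> = lc n n (\<lambda>j. of_real (d j) * cinner (v j) x) v $ a" using a by (simp add: lc_index)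
  finally show "(smat n v d *\<^sub>v x) $ a = lc n n (\<lambda>j. of_real (d j) * cinner (v j) x) v $ a" .
qed (use x in simp)

lemma lc_delta: assumes i: "i < m" and c: "v i \<in> carrier_vec n"
  shows "lc n m (\<lambda>j. if j = i then a else 0) v = a \<cdot>\<^sub>v v i"
proof (rule eq_vecI)
  fix b assume "b < dim_vec (a \<cdot>\<^sub>v v i)"
  hence b: "b < n" using c by simp
  have "lc n m (\<lambda>j. if j = i then a else 0) v $ b = (\<Sum>j<m. (if j = i then a else 0) * v j $ b)"
    using b by (simp add: lc_index)
  also have "\<dots> = (\<Sum>j<m. if j = i then a * v j $ b else 0)" by (rule sum.cong) auto
  also have "\<dots> = a * v i $ b" using i by simp
  finally show "lc n m (\<lambda>j. if j = i then a else 0) v $ b = (a \<cdot>\<^sub>v v i) $ b" using b c by simp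
qed (use c in simp)

lemma smat_eig: assumes o: "orthonormal n n v" and i: "i < n"
  shows "smat n v d *\<^sub>v v i = of_real (d i) \<cdot>\<^sub>v v i"
proof -
  have vc: "\<forall>j<n. v j \<in> carrier_vec n" using o by (simp add: orthonormal_carrier)
  have "smat n v d *\<^sub>v v i = lc n n (\<lambda>j. of_real (d j) * cinner (v j) (v i)) v"
    using smat_mult[OF vc] vc i by simp
  also have "\<dots> = lc n n (\<lambda>j. if j = i then of_real (d i) else 0) v"
    by (rule lc_cong) (use o i in \<open>auto simp: orthonormal_inner\<close>)
  also have "\<dots> = of_real (d i) \<cdot>\<^sub>v v i" using lc_delta i vc by simp
  finally show ?thesis .
qed

lemma smat_adj: "adj (smat n v d) = smat n v d"
proof (rule eq_matI)
  have c: "adj (smat n v d) \<in> carrier_mat n n" by (rule adj_carrier) simp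
  show "dim_row (adj (smat n v d)) = dim_row (smat n v d)" "dim_col (adj (smat n v d)) = dim_col (smat n v d)"
    using c by auto
  fix i j assume "i < dim_row (smat n v d)" "j < dim_col (smat n v d)"
  thus "adj (smat n v d) $$ (i, j) = smat n v d $$ (i, j)"
    by (simp add: index_adj[of _ n n] smat_def mult.commute mult.left_commute)
qed

lemma smat_psd: assumes o: "orthonormal n n v" and d: "\<forall>j<n. d j \<ge> 0"
  shows "psd_mat n (smat n v d)"
  unfolding psd_mat_def
proof (intro conjI ballI)
  show "smat n v d \<in> carrier_mat n n" by simp
  show "adj (smat n v d) = smat n v d" by (rule smat_adj)
  fix x :: "complex vec" assume x: "x \<in> carrier_vec n"
  have vc: "\<forall>j<n. v j \<in> carrier_vec n" using o by (simp add: orthonormal_carrier)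
  have "cinner x (smat n v d *\<^sub>v x) = (\<Sum>j<n. of_real (d j) * cinner (v j) x * cinner x (v j))"
    using smat_mult[OF vc x] x vc by (simp add: cinner_lc_right)
  also have "\<dots> = of_real (\<Sum>j<n. d j * (cmod (cinner (v j) x))\<^sup>2)"
  proof -
    have "\<And>j. j < n \<Longrightarrow> cinner x (v j) = cnj (cinner (v j) x)" using x vc by (simp add: cinner_swap[OF _ x])
    moreover have "\<And>z::complex. z * cnj z = of_real ((cmod z)\<^sup>2)" by (rule complex_norm_square[symmetric])
    ultimately show ?thesis by (simp add: of_real_sum mult.assoc)
  qed
  finally have eq: "cinner x (smat n v d *\<^sub>v x) = of_real (\<Sum>j<n. d j * (cmod (cinner (v j) x))\<^sup>2)" .
  show "Im (cinner x (smat n v d *\<^sub>v x)) = 0" unfolding eq by simp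
  show "Re (cinner x (smat n v d *\<^sub>v x)) \<ge> 0" unfolding eq using d by (auto intro!: sum_nonneg)
qed

lemma psd_sqrt_exists: assumes X: "X \<in> carrier_mat n n"
  shows "\<exists>P. psd_mat n P \<and> P * P = adj X * X"
proof -
  let ?M = "adj X * X"
  have Mc: "?M \<in> carrier_mat n n" using X adj_carrier[OF X] by simp
  have hM: "hermitian n ?M" unfolding hermitian_def
  proof (intro conjI ballI)
    show "?M \<in> carrier_mat n n" by (rule Mc)
    fix x y :: "complex vec" assume x: "x \<in> carrier_vec n" and y: "y \<in> carrier_vec n"
    have Mx: "?M *\<^sub>v x \<in> carrier_vec n" using Mc x by simp
    have "cinner (?M *\<^sub>v x) y = cnj (cinner y (?M *\<^sub>v x))" by (rule cinner_swap[OF y Mx])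
    also have "\<dots> = cnj (cinner (X *\<^sub>v y) (X *\<^sub>v x))" using cinner_XX[OF X y x] by simp
    also have "\<dots> = cinner (X *\<^sub>v x) (X *\<^sub>v y)"
    proof -
      have "X *\<^sub>v x \<in> carrier_vec n" "X *\<^sub>v y \<in> carrier_vec n" using X x y by auto
      thus ?thesis using cinner_swap[of "X *\<^sub>v x" n "X *\<^sub>v y"] by simp
    qed
    also have "\<dots> = cinner x (?M *\<^sub>v y)" using cinner_XX[OF X x y] by simp
    finally show "cinner x (?M *\<^sub>v y) = cinner (?M *\<^sub>v x) y" by simp
  qed
  obtain v mu where o: "orthonormal n n v" and ev: "\<forall>j<n. ?M *\<^sub>v v j = complex_of_real (mu j) \<cdot>\<^sub>v v j"
    using spectral_unsorted[OF hM] by auto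
  have vc: "\<And>j. j < n \<Longrightarrow> v j \<in> carrier_vec n" using o by (simp add: orthonormal_carrier)
  have mu0: "mu j \<ge> 0" if j: "j < n" for j
  proof -
    have "of_real (mu j) = cinner (v j) (?M *\<^sub>v v j)" using ev j vc[OF j] o
      by (simp add: cinner_smult_right[of _ n] orthonormal_inner)
    also have "\<dots> = cinner (X *\<^sub>v v j) (X *\<^sub>v v j)" using cinner_XX[OF X vc[OF j] vc[OF j]] .
    finally have e: "of_real (mu j) = cinner (X *\<^sub>v v j) (X *\<^sub>v v j)" .
    have Xv: "X *\<^sub>v v j \<in> carrier_vec n" using X vc[OF j] by simp
    have "Re (cinner (X *\<^sub>v v j) (X *\<^sub>v v j)) \<ge> 0" using cinner_self_Re[OF Xv] by simp
    thus ?thesis unfolding e[symmetric] by simp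
  qed
  let ?P = "smat n v (\<lambda>j. sqrt (mu j))"
  have "psd_mat n ?P" by (rule smat_psd[OF o]) (simp add: mu0)
  moreover have "?P * ?P = ?M"
  proof (rule mat_eq_on_basis[OF _ Mc o])
    show "?P * ?P \<in> carrier_mat n n" by (rule mult_carrier_mat[of _ n n]) (rule smat_carrier)+
    fix j assume j: "j < n"
    have "(?P * ?P) *\<^sub>v v j = ?P *\<^sub>v (?P *\<^sub>v v j)" using vc[OF j]
      by (simp add: assoc_mult_mat_vec[of _ n n _ n])
    also have "\<dots> = of_real (sqrt (mu j)) \<cdot>\<^sub>v (of_real (sqrt (mu j)) \<cdot>\<^sub>v v j)"
      using smat_eig[OF o j] vc[OF j] by (simp add: mult_mat_vec[of _ n n])
    also have "\<dots> = of_real (mu j) \<cdot>\<^sub>v v j" using mu0[OF j]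
      by (simp add: smult_smult_assoc flip: of_real_mult)
    also have "\<dots> = ?M *\<^sub>v v j" using ev j by simp
    finally show "(?P * ?P) *\<^sub>v v j = ?M *\<^sub>v v j" .
  qed
  ultimately show ?thesis by blast
qed

lemma psd_sqrt_unique: assumes P: "psd_mat n P" and R: "psd_mat n R" and PR: "P * P = R * R"
  shows "P = R"
proof -
  have hP: "hermitian n P" and hR: "hermitian n R" using P R by (auto intro: psd_hermitian)
  have Pc: "P \<in> carrier_mat n n" and Rc: "R \<in> carrier_mat n n" using P R unfolding psd_mat_def by auto
  obtain v p where ov: "orthonormal n n v" and evP: "\<forall>j<n. P *\<^sub>v v j = complex_of_real (p j) \<cdot>\<^sub>v v j"
    using spectral_unsorted[OF hP] by auto
  obtain r q where or: "orthonormal n n r" and evR: "\<forall>j<n. R *\<^sub>v r j = complex_of_real (q j) \<cdot>\<^sub>v r j"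
    using spectral_unsorted[OF hR] by auto
  have vc: "\<And>j. j < n \<Longrightarrow> v j \<in> carrier_vec n" using ov by (simp add: orthonormal_carrier)
  have rc: "\<And>j. j < n \<Longrightarrow> r j \<in> carrier_vec n" using or by (simp add: orthonormal_carrier)
  have p0: "p j \<ge> 0" if j: "j < n" for j
    by (rule psd_eig_nonneg[OF P vc[OF j]]) (use evP ov j in \<open>simp_all add: orthonormal_inner\<close>)
  have q0: "q j \<ge> 0" if j: "j < n" for j
    by (rule psd_eig_nonneg[OF R rc[OF j]]) (use evR or j in \<open>simp_all add: orthonormal_inner\<close>)
  have "R *\<^sub>v v j = P *\<^sub>v v j" if j: "j < n" for j
  proof (rule coeff_eq[OF or])
    show "R *\<^sub>v v j \<in> carrier_vec n" "P *\<^sub>v v j \<in> carrier_vec n" using Rc Pc vc[OF j] by auto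
    fix l assume l: "l < n"
    have RR: "cinner (r l) ((R * R) *\<^sub>v v j) = of_real (q l * q l) * cinner (r l) (v j)"
    proof -
      have "(R * R) *\<^sub>v v j = R *\<^sub>v (R *\<^sub>v v j)" using Rc vc[OF j] by (simp add: assoc_mult_mat_vec[of _ n n _ n])
      hence "cinner (r l) ((R * R) *\<^sub>v v j) = of_real (q l) * cinner (r l) (R *\<^sub>v v j)"
        using cinner_herm_eig[OF hR rc[OF l] _ ] evR l Rc vc[OF j] by simp
      also have "\<dots> = of_real (q l) * (of_real (q l) * cinner (r l) (v j))"
        using cinner_herm_eig[OF hR rc[OF l] _ vc[OF j]] evR l by simp
      finally show ?thesis by simp
    qed
    have PP: "cinner (r l) ((P * P) *\<^sub>v v j) = of_real (p j * p j) * cinner (r l) (v j)"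
    proof -
      have "(P * P) *\<^sub>v v j = P *\<^sub>v (P *\<^sub>v v j)" using Pc vc[OF j] by (simp add: assoc_mult_mat_vec[of _ n n _ n])
      also have "\<dots> = of_real (p j * p j) \<cdot>\<^sub>v v j" using evP j Pc vc[OF j]
        by (simp add: mult_mat_vec[of _ n n] smult_smult_assoc)
      finally show ?thesis using rc[OF l] vc[OF j] by (simp add: cinner_smult_right[of _ n])
    qed
    have key: "of_real (q l) * cinner (r l) (v j) = of_real (p j) * cinner (r l) (v j)"
    proof (cases "cinner (r l) (v j) = 0")
      case False
      have "of_real (q l * q l) * cinner (r l) (v j) = of_real (p j * p j) * cinner (r l) (v j)"
        using RR PP PR by simp
      hence "of_real (q l) * of_real (q l) = (of_real (p j) * of_real (p j) :: complex)" using False by simp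
      hence "q l * q l = p j * p j" by (simp only: of_real_mult[symmetric] of_real_eq_iff)
      hence "sqrt (q l * q l) = sqrt (p j * p j)" by simp
      hence "q l = p j" using q0[OF l] p0[OF j] by simp
      thus ?thesis by simp
    qed simp
    have "cinner (r l) (R *\<^sub>v v j) = of_real (q l) * cinner (r l) (v j)"
      using cinner_herm_eig[OF hR rc[OF l] _ vc[OF j]] evR l by simp
    also have "\<dots> = of_real (p j) * cinner (r l) (v j)" by (rule key)
    also have "\<dots> = cinner (r l) (P *\<^sub>v v j)" using evP j rc[OF l] vc[OF j]
      by (simp add: cinner_smult_right[of _ n])
    finally show "cinner (r l) (R *\<^sub>v v j) = cinner (r l) (P *\<^sub>v v j)" .
  qed
  from mat_eq_on_basis[OF Rc Pc ov this] show ?thesis by simp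
qed

lemma mat_abs_props: assumes X: "X \<in> carrier_mat n n"
  shows "psd_mat n (mat_abs X)" "mat_abs X * mat_abs X = adj X * X"
proof -
  have dc: "dim_col X = n" using X by simp
  obtain P0 where P0: "psd_mat n P0" "P0 * P0 = adj X * X" using psd_sqrt_exists[OF X] by blast
  have ex: "\<exists>!P. psd_mat (dim_col X) P \<and> P * P = adj X * X"
    unfolding dc
  proof (rule ex1I[of _ P0])
    show "psd_mat n P0 \<and> P0 * P0 = adj X * X" using P0 by simp
    fix P assume "psd_mat n P \<and> P * P = adj X * X"
    thus "P = P0" using psd_sqrt_unique[OF _ P0(1)] P0(2) by simp
  qed
  have "psd_mat (dim_col X) (mat_abs X) \<and> mat_abs X * mat_abs X = adj X * X"
    unfolding mat_abs_def by (rule theI'[OF ex])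
  thus "psd_mat n (mat_abs X)" "mat_abs X * mat_abs X = adj X * X" using dc by auto
qed



lemma sorted_rev_desc: assumes "\<forall>i j. i \<le> j \<longrightarrow> j < n \<longrightarrow> (s j :: real) \<le> s i"
  shows "sorted (rev (map s [0..<n]))"
proof (subst sorted_iff_nth_mono, intro allI impI)
  fix i j assume ij: "i \<le> j" and j: "j < length (rev (map s [0..<n]))"
  hence jn: "j < n" by simp
  have "rev (map s [0..<n]) ! i = s (n - 1 - i)" using ij jn by (simp add: rev_nth)
  moreover have "rev (map s [0..<n]) ! j = s (n - 1 - j)" using jn by (simp add: rev_nth)
  moreover have "s (n - 1 - i) \<le> s (n - 1 - j)" using assms ij jn by auto
  ultimately show "rev (map s [0..<n]) ! i \<le> rev (map s [0..<n]) ! j" by simp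
qed

lemma sing_val_eig: assumes X: "X \<in> carrier_mat n n" and o: "orthonormal n n e"
  and ev: "\<forall>j<n. mat_abs X *\<^sub>v e j = complex_of_real (s j) \<cdot>\<^sub>v e j"
  and srt: "\<forall>i j. i \<le> j \<longrightarrow> j < n \<longrightarrow> s j \<le> s i"
  and j: "1 \<le> j" "j \<le> n"
  shows "sing_val X j = s (j - 1)"
proof -
  have Pc: "mat_abs X \<in> carrier_mat n n" using mat_abs_props(1)[OF X] unfolding psd_mat_def by auto
  have cp: "char_poly (mat_abs X) = (\<Prod>a\<leftarrow>map (\<lambda>j. complex_of_real (s j)) [0..<n]. [:- a, 1:])"
    by (rule char_poly_eig[OF Pc o]) (use ev in simp)
  have "image_mset Re (proots (char_poly (mat_abs X))) = mset (map s [0..<n])"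
    unfolding cp proots_linear_prod by (simp add: mset_map[symmetric] o_def del: mset_map)
  hence "singular_values X = rev (sort (map s [0..<n]))"
    by (simp only: singular_values_def sorted_list_of_multiset_mset)
  also have "sort (map s [0..<n]) = rev (map s [0..<n])"
    by (rule properties_for_sort) (auto intro: sorted_rev_desc[OF srt])
  finally have "singular_values X = map s [0..<n]" by simp
  thus ?thesis unfolding sing_val_def using j by simp
qed

lemma svd_data: assumes X: "X \<in> carrier_mat n n"
  shows "\<exists>e s w. orthonormal n n e \<and> orthonormal n n w \<and>
    (\<forall>j<n. mat_abs X *\<^sub>v e j = complex_of_real (s j) \<cdot>\<^sub>v e j) \<and> (\<forall>j<n. s j \<ge> 0) \<and>
    (\<forall>i j. i \<le> j \<longrightarrow> j < n \<longrightarrow> s j \<le> s i) \<and>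
    (\<forall>j<n. X *\<^sub>v e j = complex_of_real (s j) \<cdot>\<^sub>v w j) \<and>
    (\<forall>j. 1 \<le> j \<longrightarrow> j \<le> n \<longrightarrow> sing_val X j = s (j - 1))"
proof -
  let ?P = "mat_abs X"
  have psd: "psd_mat n ?P" and PP: "?P * ?P = adj X * X" using mat_abs_props[OF X] by auto
  have Pc: "?P \<in> carrier_mat n n" using psd unfolding psd_mat_def by auto
  obtain e s where o: "orthonormal n n e" and ev: "\<forall>j<n. ?P *\<^sub>v e j = complex_of_real (s j) \<cdot>\<^sub>v e j"
    and srt: "\<forall>i j. i \<le> j \<longrightarrow> j < n \<longrightarrow> s j \<le> s i"
    using spectral_sorted[OF psd_hermitian[OF psd]] by auto
  have ec: "\<And>j. j < n \<Longrightarrow> e j \<in> carrier_vec n" using o by (simp add: orthonormal_carrier)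
  have s0: "s j \<ge> 0" if j: "j < n" for j
    by (rule psd_eig_nonneg[OF psd ec[OF j]]) (use ev o j in \<open>simp_all add: orthonormal_inner\<close>)
  have XX: "cinner (X *\<^sub>v e i) (X *\<^sub>v e j) = (if i = j then of_real (s j * s j) else 0)"
    if i: "i < n" and j: "j < n" for i j
  proof -
    have "cinner (X *\<^sub>v e i) (X *\<^sub>v e j) = cinner (e i) ((?P * ?P) *\<^sub>v e j)"
      using cinner_XX[OF X ec[OF i] ec[OF j]] PP by simp
    also have "(?P * ?P) *\<^sub>v e j = ?P *\<^sub>v (?P *\<^sub>v e j)" using Pc ec[OF j]
      by (simp add: assoc_mult_mat_vec[of _ n n _ n])
    also have "\<dots> = of_real (s j * s j) \<cdot>\<^sub>v e j" using ev j Pc ec[OF j]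
      by (simp add: mult_mat_vec[of _ n n] smult_smult_assoc)
    finally show ?thesis using ec[OF i] ec[OF j] o i j
      by (simp add: cinner_smult_right[of _ n] orthonormal_inner)
  qed
  define r where "r = (if \<exists>j<n. s j = 0 then (LEAST j. j < n \<and> s j = 0) else n)"
  have rn: "r \<le> n" and rpos: "\<And>j. j < r \<Longrightarrow> s j > 0" and rz: "\<And>j. r \<le> j \<Longrightarrow> j < n \<Longrightarrow> s j = 0"
  proof -
    show "r \<le> n"
    proof (cases "\<exists>j<n. s j = 0")
      case True
      then obtain j where "j < n \<and> s j = 0" by auto
      hence "(LEAST j. j < n \<and> s j = 0) \<le> j" by (rule Least_le)
      thus ?thesis using True \<open>j < n \<and> s j = 0\<close> unfolding r_def by simp
    qed (auto simp: r_def)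
    fix j
    show "j < r \<Longrightarrow> s j > 0"
    proof -
      assume jr: "j < r"
      hence jn: "j < n" using \<open>r \<le> n\<close> by simp
      have "s j \<noteq> 0"
      proof (cases "\<exists>j<n. s j = 0")
        case True
        hence "j < (LEAST j. j < n \<and> s j = 0)" using jr unfolding r_def by simp
        thus ?thesis using not_less_Least jn by blast
      next
        case False thus ?thesis using jn by auto
      qed
      thus "s j > 0" using s0[OF jn] by simp
    qed
    show "r \<le> j \<Longrightarrow> j < n \<Longrightarrow> s j = 0"
    proof -
      assume rj: "r \<le> j" and jn: "j < n"
      show "s j = 0"
      proof (cases "\<exists>j<n. s j = 0")
        case True
        have ex: "\<exists>j. j < n \<and> s j = 0" using True by auto
        have rr: "r = (LEAST j. j < n \<and> s j = 0)" using True r_def by simp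
        have rl: "r < n \<and> s r = 0" unfolding rr by (rule LeastI_ex[OF ex])
        hence "s j \<le> s r" using srt rj jn by blast
        thus ?thesis using rl s0[OF jn] by simp
      next
        case False
        hence "r = n" unfolding r_def by auto
        thus ?thesis using rj jn by simp
      qed
    qed
  qed
  define w0 where "w0 = (\<lambda>j. complex_of_real (1 / s j) \<cdot>\<^sub>v (X *\<^sub>v e j))"
  have ow0: "orthonormal n r w0"
    unfolding orthonormal_def
  proof (intro conjI allI impI)
    fix i assume "i < r" thus "w0 i \<in> carrier_vec n" unfolding w0_def using X ec rn by auto
  next
    fix i j assume i: "i < r" and j: "j < r"
    have in': "i < n" "j < n" using i j rn by auto
    have "cinner (w0 i) (w0 j) = of_real (1 / s i) * of_real (1 / s j) * cinner (X *\<^sub>v e i) (X *\<^sub>v e j)"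
      unfolding w0_def using X ec[OF in'(1)] ec[OF in'(2)]
      by (simp add: cinner_smult_left[of _ n] cinner_smult_right[of _ n])
    also have "\<dots> = (if i = j then 1 else 0)" using XX[OF in'] rpos[OF i] rpos[OF j]
      by (simp add: field_simps)
    finally show "cinner (w0 i) (w0 j) = (if i = j then 1 else 0)" .
  qed
  obtain w where ow: "orthonormal n n w" and ww: "\<forall>i<r. w i = w0 i"
    using orthonormal_extend[OF ow0 rn] by auto
  have Xe: "X *\<^sub>v e j = complex_of_real (s j) \<cdot>\<^sub>v w j" if j: "j < n" for j
  proof (cases "j < r")
    case True
    have "complex_of_real (s j) \<cdot>\<^sub>v w j = (of_real (s j) * of_real (1 / s j)) \<cdot>\<^sub>v (X *\<^sub>v e j)"
      using ww True unfolding w0_def by (simp add: smult_smult_assoc)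
    also have "of_real (s j) * of_real (1 / s j) = (1::complex)" using rpos[OF True]
      by (simp flip: of_real_mult)
    finally show ?thesis using X ec[OF j] by simp
  next
    case False
    hence sj: "s j = 0" using rz j by simp
    have Xv: "X *\<^sub>v e j \<in> carrier_vec n" using X ec[OF j] by simp
    have "cinner (X *\<^sub>v e j) (X *\<^sub>v e j) = 0" using XX[OF j j] sj by simp
    hence "X *\<^sub>v e j = 0\<^sub>v n" by (rule cinner_self_zero[OF Xv])
    moreover have "w j \<in> carrier_vec n" using ow j by (simp add: orthonormal_carrier)
    ultimately show ?thesis using sj by auto
  qed
  have sv: "\<forall>j. 1 \<le> j \<longrightarrow> j \<le> n \<longrightarrow> sing_val X j = s (j - 1)"
    using sing_val_eig[OF X o ev srt] by blast
  show ?thesis using o ow ev s0 srt Xe sv by blast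
qed



lemma rearr_identity:
  fixes s g :: "nat \<Rightarrow> real" assumes kn: "k \<le> n"
  shows "(\<Sum>j<k. s j) - (\<Sum>j<n. s j * g j) =
     (\<Sum>j<k. (s j - c) * (1 - g j)) + (\<Sum>j\<in>{k..<n}. (c - s j) * g j) + c * (real k - (\<Sum>j<n. g j))"
proof -
  have split: "\<And>f :: nat \<Rightarrow> real. (\<Sum>j<n. f j) = (\<Sum>j<k. f j) + (\<Sum>j\<in>{k..<n}. f j)"
    using kn by (metis atLeast0LessThan le0 sum.atLeastLessThan_concat)
  have A: "(\<Sum>j<n. s j * g j) = (\<Sum>j<k. s j * g j) + (\<Sum>j\<in>{k..<n}. s j * g j)" by (rule split)
  have B: "(\<Sum>j<n. g j) = (\<Sum>j<k. g j) + (\<Sum>j\<in>{k..<n}. g j)" by (rule split)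
  have C: "(\<Sum>j<k. (s j - c) * (1 - g j)) = (\<Sum>j<k. s j) - (\<Sum>j<k. s j * g j) - c * real k + c * (\<Sum>j<k. g j)"
    by (simp add: algebra_simps sum_subtractf sum_distrib_left sum.distrib)
  have D: "(\<Sum>j\<in>{k..<n}. (c - s j) * g j) = c * (\<Sum>j\<in>{k..<n}. g j) - (\<Sum>j\<in>{k..<n}. s j * g j)"
    by (simp add: algebra_simps sum_subtractf sum_distrib_left)
  show ?thesis unfolding A B C D by (simp add: algebra_simps)
qed

lemma rearr:
  fixes s g :: "nat \<Rightarrow> real"
  assumes kn: "k \<le> n" and k1: "1 \<le> k"
    and desc: "\<forall>i j. i \<le> j \<longrightarrow> j < n \<longrightarrow> s j \<le> s i" and s0: "\<forall>j<n. s j \<ge> 0"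
    and g: "\<forall>j<n. 0 \<le> g j \<and> g j \<le> 1" and gs: "(\<Sum>j<n. g j) \<le> real k"
  shows "(\<Sum>j<n. s j * g j) \<le> (\<Sum>j<k. s j)"
    and "(\<Sum>j<n. s j * g j) = (\<Sum>j<k. s j) \<Longrightarrow>
         \<forall>j<n. (s j > s (k - 1) \<longrightarrow> g j = 1) \<and> (s j < s (k - 1) \<longrightarrow> g j = 0)"
proof -
  let ?c = "s (k - 1)"
  have c0: "?c \<ge> 0" using s0 kn k1 by simp
  have t1: "\<forall>j\<in>{..<k}. (s j - ?c) * (1 - g j) \<ge> 0"
  proof
    fix j assume "j \<in> {..<k}"
    hence "s j \<ge> ?c" "1 - g j \<ge> 0" using desc g kn k1 by auto
    thus "(s j - ?c) * (1 - g j) \<ge> 0" by simp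
  qed
  have t2: "\<forall>j\<in>{k..<n}. (?c - s j) * g j \<ge> 0"
  proof
    fix j assume "j \<in> {k..<n}"
    hence "s j \<le> ?c" "g j \<ge> 0" using desc g kn k1 by auto
    thus "(?c - s j) * g j \<ge> 0" by simp
  qed
  have t3: "?c * (real k - (\<Sum>j<n. g j)) \<ge> 0" using c0 gs by simp
  have S1: "(\<Sum>j<k. (s j - ?c) * (1 - g j)) \<ge> 0" using t1 by (auto intro: sum_nonneg)
  have S2: "(\<Sum>j\<in>{k..<n}. (?c - s j) * g j) \<ge> 0" using t2 by (auto intro: sum_nonneg)
  note id = rearr_identity[OF kn, of s g ?c]
  show "(\<Sum>j<n. s j * g j) \<le> (\<Sum>j<k. s j)" using id S1 S2 t3 by linarith
  assume eq: "(\<Sum>j<n. s j * g j) = (\<Sum>j<k. s j)"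
  have z1: "(\<Sum>j<k. (s j - ?c) * (1 - g j)) = 0" and z2: "(\<Sum>j\<in>{k..<n}. (?c - s j) * g j) = 0"
    using id S1 S2 t3 eq by linarith+
  have e1: "\<forall>j\<in>{..<k}. (s j - ?c) * (1 - g j) = 0"
    using sum_nonneg_eq_0_iff[of "{..<k}" "\<lambda>j. (s j - ?c) * (1 - g j)"] z1 t1 by blast
  have e2: "\<forall>j\<in>{k..<n}. (?c - s j) * g j = 0"
    using sum_nonneg_eq_0_iff[of "{k..<n}" "\<lambda>j. (?c - s j) * g j"] z2 t2 by blast
  show "\<forall>j<n. (s j > ?c \<longrightarrow> g j = 1) \<and> (s j < ?c \<longrightarrow> g j = 0)"
  proof (intro allI impI conjI)
    fix j assume j: "j < n" and sj: "s j > ?c"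
    have "j < k"
    proof (rule ccontr)
      assume "\<not> j < k" hence "k - 1 \<le> j" by simp
      hence "s j \<le> ?c" using desc j by blast
      thus False using sj by simp
    qed
    hence "(s j - ?c) * (1 - g j) = 0" using e1 by blast
    thus "g j = 1" using sj by simp
  next
    fix j assume j: "j < n" and sj: "s j < ?c"
    have "k \<le> j"
    proof (rule ccontr)
      assume "\<not> k \<le> j" hence "j \<le> k - 1" by simp
      hence "?c \<le> s j" using desc kn k1 by auto
      thus False using sj by simp
    qed
    hence "(?c - s j) * g j = 0" using e2 j by simp
    thus "g j = 0" using sj by simp
  qed
qed

lemma cmod_cnj_cinner: assumes "x \<in> carrier_vec n" "y \<in> carrier_vec n"
  shows "cmod (cinner x y) = cmod (cinner y x)"
  using cinner_swap[OF assms] by simp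

lemma cmod_sq_eq: "cnj z * z = complex_of_real ((cmod z)\<^sup>2)"
  using complex_norm_square[of z] by (simp add: mult.commute)

lemma parseval_real: assumes o: "orthonormal n n e" and x: "x \<in> carrier_vec n"
  shows "(\<Sum>j<n. (cmod (cinner (e j) x))\<^sup>2) = Re (cinner x x)"
proof -
  have "cinner x x = of_real (\<Sum>j<n. (cmod (cinner (e j) x))\<^sup>2)"
    unfolding parseval_norm[OF o x] cmod_sq_eq by (simp only: of_real_sum)
  thus ?thesis by simp
qed

lemma kf_core:
  assumes X: "X \<in> carrier_mat n n" and oe: "orthonormal n n e" and ow: "orthonormal n n w"
    and Xe: "\<forall>j<n. X *\<^sub>v e j = complex_of_real (s j) \<cdot>\<^sub>v w j"
    and s0: "\<forall>j<n. s j \<ge> 0" and desc: "\<forall>i j. i \<le> j \<longrightarrow> j < n \<longrightarrow> s j \<le> s i"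
    and kn: "k \<le> n" and k1: "1 \<le> k"
    and ox: "orthonormal n k x" and oy: "orthonormal n k y"
  shows "cmod (\<Sum>i<k. cinner (y i) (X *\<^sub>v x i)) \<le> (\<Sum>j<k. s j)"
proof -
  have ec: "\<forall>j<n. e j \<in> carrier_vec n" using oe by (simp add: orthonormal_carrier)
  have wc: "\<And>j. j < n \<Longrightarrow> w j \<in> carrier_vec n" using ow by (simp add: orthonormal_carrier)
  have xc: "\<And>i. i < k \<Longrightarrow> x i \<in> carrier_vec n" using ox by (simp add: orthonormal_carrier)
  have yc: "\<And>i. i < k \<Longrightarrow> y i \<in> carrier_vec n" using oy by (simp add: orthonormal_carrier)
  define a where "a = (\<lambda>j. \<Sum>i<k. cinner (e j) (x i) * cinner (y i) (w j))"
  define bet where "bet = (\<lambda>j. \<Sum>i<k. (cmod (cinner (e j) (x i)))\<^sup>2)"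
  define alp where "alp = (\<lambda>j. \<Sum>i<k. (cmod (cinner (y i) (w j)))\<^sup>2)"
  have trm: "cinner (y i) (X *\<^sub>v x i) = (\<Sum>j<n. of_real (s j) * (cinner (e j) (x i) * cinner (y i) (w j)))"
    if i: "i < k" for i
  proof -
    have "X *\<^sub>v x i = X *\<^sub>v lc n n (\<lambda>j. cinner (e j) (x i)) e" using basis_expand[OF oe xc[OF i]] by simp
    also have "\<dots> = lc n n (\<lambda>j. cinner (e j) (x i)) (\<lambda>j. X *\<^sub>v e j)" by (rule mat_lc[OF X ec])
    finally have "cinner (y i) (X *\<^sub>v x i) = (\<Sum>j<n. cinner (e j) (x i) * cinner (y i) (X *\<^sub>v e j))"
      using yc[OF i] X ec by (simp add: cinner_lc_right)
    also have "\<dots> = (\<Sum>j<n. of_real (s j) * (cinner (e j) (x i) * cinner (y i) (w j)))"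
      using Xe yc[OF i] wc by (auto intro!: sum.cong simp: cinner_smult_right[of _ n])
    finally show ?thesis .
  qed
  have "(\<Sum>i<k. cinner (y i) (X *\<^sub>v x i)) = (\<Sum>i<k. \<Sum>j<n. of_real (s j) * (cinner (e j) (x i) * cinner (y i) (w j)))"
    using trm by simp
  also have "\<dots> = (\<Sum>j<n. \<Sum>i<k. of_real (s j) * (cinner (e j) (x i) * cinner (y i) (w j)))" by (rule sum.swap)
  also have "\<dots> = (\<Sum>j<n. of_real (s j) * a j)" unfolding a_def by (simp add: sum_distrib_left)
  finally have T: "(\<Sum>i<k. cinner (y i) (X *\<^sub>v x i)) = (\<Sum>j<n. of_real (s j) * a j)" .
  have abound: "cmod (a j) \<le> (bet j + alp j) / 2" for j
  proof -
    have "cmod (a j) \<le> (\<Sum>i<k. cmod (cinner (e j) (x i) * cinner (y i) (w j)))"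
      unfolding a_def by (rule norm_sum)
    also have "\<dots> \<le> (\<Sum>i<k. ((cmod (cinner (e j) (x i)))\<^sup>2 + (cmod (cinner (y i) (w j)))\<^sup>2) / 2)"
    proof (rule sum_mono)
      fix i
      have "0 \<le> (cmod (cinner (e j) (x i)) - cmod (cinner (y i) (w j)))\<^sup>2" by simp
      thus "cmod (cinner (e j) (x i) * cinner (y i) (w j)) \<le> ((cmod (cinner (e j) (x i)))\<^sup>2 + (cmod (cinner (y i) (w j)))\<^sup>2) / 2"
        by (simp add: norm_mult power2_diff field_simps)
    qed
    also have "\<dots> = (bet j + alp j) / 2" unfolding bet_def alp_def
      by (simp only: sum_divide_distrib[symmetric] sum.distrib)
    finally show ?thesis .
  qed
  have bet1: "bet j \<le> 1" if j: "j < n" for j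
  proof -
    have "bet j = (\<Sum>i<k. (cmod (cinner (x i) (e j)))\<^sup>2)" unfolding bet_def
      using xc ec j by (auto intro!: sum.cong simp: cmod_cnj_cinner[of _ n])
    also have "\<dots> \<le> Re (cinner (e j) (e j))" using bessel[OF ox] ec j by simp
    also have "\<dots> = 1" using oe j by (simp add: orthonormal_inner)
    finally show ?thesis .
  qed
  have alp1: "alp j \<le> 1" if j: "j < n" for j
  proof -
    have "alp j \<le> Re (cinner (w j) (w j))" unfolding alp_def using bessel[OF oy wc[OF j]] .
    also have "\<dots> = 1" using ow j by (simp add: orthonormal_inner)
    finally show ?thesis .
  qed
  have betsum: "(\<Sum>j<n. bet j) = real k"
  proof -
    have "(\<Sum>j<n. bet j) = (\<Sum>i<k. \<Sum>j<n. (cmod (cinner (e j) (x i)))\<^sup>2)" unfolding bet_def by (rule sum.swap)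
    also have "\<dots> = (\<Sum>i<k. Re (cinner (x i) (x i)))" using parseval_real[OF oe] xc by simp
    also have "\<dots> = real k" using ox by (simp add: orthonormal_inner)
    finally show ?thesis .
  qed
  have alpsum: "(\<Sum>j<n. alp j) = real k"
  proof -
    have "(\<Sum>j<n. alp j) = (\<Sum>i<k. \<Sum>j<n. (cmod (cinner (y i) (w j)))\<^sup>2)" unfolding alp_def by (rule sum.swap)
    also have "\<dots> = (\<Sum>i<k. \<Sum>j<n. (cmod (cinner (w j) (y i)))\<^sup>2)"
      using yc wc by (auto intro!: sum.cong simp: cmod_cnj_cinner[of _ n])
    also have "\<dots> = (\<Sum>i<k. Re (cinner (y i) (y i)))" using parseval_real[OF ow] yc by simp
    also have "\<dots> = real k" using oy by (simp add: orthonormal_inner)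
    finally show ?thesis .
  qed
  define g where "g = (\<lambda>j. (bet j + alp j) / 2)"
  have g01: "\<forall>j<n. 0 \<le> g j \<and> g j \<le> 1"
  proof (intro allI impI conjI)
    fix j assume j: "j < n"
    have "bet j \<ge> 0" "alp j \<ge> 0" unfolding bet_def alp_def by (auto intro: sum_nonneg)
    thus "0 \<le> g j" unfolding g_def by simp
    show "g j \<le> 1" unfolding g_def using bet1[OF j] alp1[OF j] by simp
  qed
  have gsum: "(\<Sum>j<n. g j) \<le> real k" unfolding g_def
    by (simp only: sum_divide_distrib[symmetric] sum.distrib betsum alpsum) simp
  have "cmod (\<Sum>i<k. cinner (y i) (X *\<^sub>v x i)) \<le> (\<Sum>j<n. cmod (of_real (s j) * a j))"
    unfolding T by (rule norm_sum)
  also have "\<dots> \<le> (\<Sum>j<n. s j * g j)"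
  proof (rule sum_mono)
    fix j assume "j \<in> {..<n}"
    hence "s j \<ge> 0" using s0 by simp
    hence "s j * cmod (a j) \<le> s j * ((bet j + alp j) / 2)" using abound[of j] by (rule mult_left_mono[rotated])
    thus "cmod (of_real (s j) * a j) \<le> s j * g j" unfolding g_def using \<open>s j \<ge> 0\<close>
      by (simp add: norm_mult)
  qed
  also have "\<dots> \<le> (\<Sum>j<k. s j)" by (rule rearr(1)[OF kn k1 desc s0 g01 gsum])
  finally show ?thesis .
qed

lemma ky_fan_sum: assumes "\<forall>j. 1 \<le> j \<longrightarrow> j \<le> n \<longrightarrow> sing_val X j = s (j - 1)" and "k \<le> n"
  shows "ky_fan_norm k X = (\<Sum>j<k. s j)"
proof -
  have "ky_fan_norm k X = (\<Sum>j<k. sing_val X (Suc j))" unfolding ky_fan_norm_def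
    by (simp add: sum.atLeast1_atMost_eq)
  also have "\<dots> = (\<Sum>j<k. s j)"
  proof (rule sum.cong)
    fix j assume "j \<in> {..<k}"
    hence "1 \<le> Suc j" "Suc j \<le> n" using assms(2) by auto
    thus "sing_val X (Suc j) = s j" using assms(1) by fastforce
  qed simp
  finally show ?thesis .
qed

lemma kf_bound: assumes X: "X \<in> carrier_mat n n" and kn: "k \<le> n" and k1: "1 \<le> k"
  and ox: "orthonormal n k x" and oy: "orthonormal n k y"
  shows "cmod (\<Sum>i<k. cinner (y i) (X *\<^sub>v x i)) \<le> ky_fan_norm k X"
proof -
  obtain e s w where d: "orthonormal n n e" "orthonormal n n w"
    "\<forall>j<n. mat_abs X *\<^sub>v e j = complex_of_real (s j) \<cdot>\<^sub>v e j" "\<forall>j<n. s j \<ge> 0"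
    "\<forall>i j. i \<le> j \<longrightarrow> j < n \<longrightarrow> s j \<le> s i"
    "\<forall>j<n. X *\<^sub>v e j = complex_of_real (s j) \<cdot>\<^sub>v w j"
    "\<forall>j. 1 \<le> j \<longrightarrow> j \<le> n \<longrightarrow> sing_val X j = s (j - 1)"
    using svd_data[OF X] by (elim exE conjE) blast
  show ?thesis unfolding ky_fan_sum[OF d(7) kn]
    by (rule kf_core[OF X d(1) d(2) d(6) d(4) d(5) kn k1 ox oy])
qed

lemma kf_attained: assumes X: "X \<in> carrier_mat n n" and kn: "k \<le> n"
  shows "\<exists>x y. orthonormal n k x \<and> orthonormal n k y \<and>
     (\<Sum>i<k. cinner (y i) (X *\<^sub>v x i)) = complex_of_real (ky_fan_norm k X)"
proof -
  obtain e s w where d: "orthonormal n n e" "orthonormal n n w"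
    "\<forall>j<n. mat_abs X *\<^sub>v e j = complex_of_real (s j) \<cdot>\<^sub>v e j" "\<forall>j<n. s j \<ge> 0"
    "\<forall>i j. i \<le> j \<longrightarrow> j < n \<longrightarrow> s j \<le> s i"
    "\<forall>j<n. X *\<^sub>v e j = complex_of_real (s j) \<cdot>\<^sub>v w j"
    "\<forall>j. 1 \<le> j \<longrightarrow> j \<le> n \<longrightarrow> sing_val X j = s (j - 1)"
    using svd_data[OF X] by (elim exE conjE) blast
  have wc: "\<And>j. j < n \<Longrightarrow> w j \<in> carrier_vec n" using d(2) by (simp add: orthonormal_carrier)
  have "(\<Sum>i<k. cinner (w i) (X *\<^sub>v e i)) = (\<Sum>i<k. complex_of_real (s i))"
    using d(6) wc d(2) kn by (auto intro!: sum.cong simp: cinner_smult_right[of _ n] orthonormal_inner)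
  also have "\<dots> = complex_of_real (ky_fan_norm k X)" unfolding ky_fan_sum[OF d(7) kn] by simp
  finally show ?thesis using orthonormal_mono[OF d(1) kn] orthonormal_mono[OF d(2) kn] by blast
qed

lemma smult_mat_mult_vec: assumes B: "B \<in> carrier_mat n n" and x: "x \<in> carrier_vec n"
  shows "(c \<cdot>\<^sub>m B) *\<^sub>v x = c \<cdot>\<^sub>v (B *\<^sub>v x)"
proof (rule eq_vecI)
  fix i assume "i < dim_vec (c \<cdot>\<^sub>v (B *\<^sub>v x))"
  hence i: "i < n" using B by simp
  show "((c \<cdot>\<^sub>m B) *\<^sub>v x) $ i = (c \<cdot>\<^sub>v (B *\<^sub>v x)) $ i"
    using i B x by (auto simp: scalar_prod_def sum_distrib_left mult.assoc intro!: sum.cong)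
qed (use B in simp)

lemma sum_cinner_combo: assumes A: "A \<in> carrier_mat n n" and B: "B \<in> carrier_mat n n"
  and ox: "orthonormal n k x" and oy: "orthonormal n k y"
  shows "(\<Sum>i<k. cinner (y i) ((A + c \<cdot>\<^sub>m B) *\<^sub>v x i)) =
    (\<Sum>i<k. cinner (y i) (A *\<^sub>v x i)) + c * (\<Sum>i<k. cinner (y i) (B *\<^sub>v x i))"
proof -
  have xc: "\<And>i. i < k \<Longrightarrow> x i \<in> carrier_vec n" using ox by (simp add: orthonormal_carrier)
  have yc: "\<And>i. i < k \<Longrightarrow> y i \<in> carrier_vec n" using oy by (simp add: orthonormal_carrier)
  have cB: "c \<cdot>\<^sub>m B \<in> carrier_mat n n" using B by simp
  have "cinner (y i) ((A + c \<cdot>\<^sub>m B) *\<^sub>v x i) = cinner (y i) (A *\<^sub>v x i) + c * cinner (y i) (B *\<^sub>v x i)"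
    if i: "i < k" for i
  proof -
    have "(A + c \<cdot>\<^sub>m B) *\<^sub>v x i = A *\<^sub>v x i + c \<cdot>\<^sub>v (B *\<^sub>v x i)"
      using add_mult_distrib_mat_vec[OF A cB xc[OF i]] smult_mat_mult_vec[OF B xc[OF i]] by simp
    thus ?thesis using A B xc[OF i] yc[OF i]
      by (simp add: cinner_add_right[of _ n] cinner_smult_right[of _ n])
  qed
  thus ?thesis by (simp add: sum.distrib sum_distrib_left)
qed

lemma kf_triangle: assumes A: "A \<in> carrier_mat n n" and B: "B \<in> carrier_mat n n"
  and kn: "k \<le> n" and k1: "1 \<le> k" and c: "cmod c = 1"
  shows "ky_fan_norm k (A + c \<cdot>\<^sub>m B) \<le> ky_fan_norm k A + ky_fan_norm k B"
proof -
  have X: "A + c \<cdot>\<^sub>m B \<in> carrier_mat n n" using A B by simp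
  obtain x y where ox: "orthonormal n k x" and oy: "orthonormal n k y"
    and eq: "(\<Sum>i<k. cinner (y i) ((A + c \<cdot>\<^sub>m B) *\<^sub>v x i)) = complex_of_real (ky_fan_norm k (A + c \<cdot>\<^sub>m B))"
    using kf_attained[OF X kn] by blast
  have "ky_fan_norm k (A + c \<cdot>\<^sub>m B) = cmod (complex_of_real (ky_fan_norm k (A + c \<cdot>\<^sub>m B)))"
  proof -
    have "ky_fan_norm k (A + c \<cdot>\<^sub>m B) \<ge> 0"
      using kf_bound[OF X kn k1 ox oy] eq by (metis norm_ge_zero order_trans)
    thus ?thesis by simp
  qed
  also have "\<dots> = cmod ((\<Sum>i<k. cinner (y i) (A *\<^sub>v x i)) + c * (\<Sum>i<k. cinner (y i) (B *\<^sub>v x i)))"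
    unfolding eq[symmetric] sum_cinner_combo[OF A B ox oy] ..
  also have "\<dots> \<le> cmod (\<Sum>i<k. cinner (y i) (A *\<^sub>v x i)) + cmod (\<Sum>i<k. cinner (y i) (B *\<^sub>v x i))"
    using norm_triangle_ineq[of "\<Sum>i<k. cinner (y i) (A *\<^sub>v x i)" "c * (\<Sum>i<k. cinner (y i) (B *\<^sub>v x i))"] c
    by (simp add: norm_mult)
  also have "\<dots> \<le> ky_fan_norm k A + ky_fan_norm k B"
    using kf_bound[OF A kn k1 ox oy] kf_bound[OF B kn k1 ox oy] by simp
  finally show ?thesis .
qed



lemma complex_sum_eq_bounds:
  fixes z1 z2 :: complex and r1 r2 :: real
  assumes eq: "z1 + z2 = of_real (r1 + r2)" and b1: "cmod z1 \<le> r1" and b2: "cmod z2 \<le> r2"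
  shows "z1 = of_real r1" "z2 = of_real r2"
proof -
  have re: "Re z1 + Re z2 = r1 + r2" using arg_cong[OF eq, of Re] by simp
  have "Re z1 \<le> cmod z1" "Re z2 \<le> cmod z2" by (rule complex_Re_le_cmod)+
  hence r1e: "Re z1 = r1" and r2e: "Re z2 = r2" using re b1 b2 by linarith+
  have "cmod z1 = r1" "cmod z2 = r2" using r1e r2e b1 b2 \<open>Re z1 \<le> cmod z1\<close> \<open>Re z2 \<le> cmod z2\<close> by linarith+
  hence "(cmod z1)\<^sup>2 = (Re z1)\<^sup>2" "(cmod z2)\<^sup>2 = (Re z2)\<^sup>2" using r1e r2e by simp_all
  hence "(Re z1)\<^sup>2 + (Im z1)\<^sup>2 = (Re z1)\<^sup>2" "(Re z2)\<^sup>2 + (Im z2)\<^sup>2 = (Re z2)\<^sup>2"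
    by (simp_all only: cmod_power2)
  hence "Im z1 = 0" "Im z2 = 0" by simp_all
  thus "z1 = of_real r1" "z2 = of_real r2" using r1e r2e by (simp_all add: complex_eq_iff)
qed

lemma lc_smult_vecs: assumes "\<forall>j<m. v j \<in> carrier_vec n"
  shows "lc n m c (\<lambda>j. a j \<cdot>\<^sub>v v j) = lc n m (\<lambda>j. c j * a j) v"
proof (rule eq_vecI)
  fix b assume "b < dim_vec (lc n m (\<lambda>j. c j * a j) v)"
  hence b: "b < n" by simp
  have "\<And>j. j < m \<Longrightarrow> (a j \<cdot>\<^sub>v v j) $ b = a j * v j $ b"
  proof -
    fix j assume "j < m"
    hence "dim_vec (v j) = n" using assms by simp
    thus "(a j \<cdot>\<^sub>v v j) $ b = a j * v j $ b" using b by simp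
  qed
  thus "lc n m c (\<lambda>j. a j \<cdot>\<^sub>v v j) $ b = lc n m (\<lambda>j. c j * a j) v $ b"
    using b by (auto simp: lc_index mult.assoc intro!: sum.cong)
qed simp

lemma psd_quad: assumes H: "hermitian n P" and oe: "orthonormal n n e"
  and ev: "\<forall>j<n. P *\<^sub>v e j = complex_of_real (s j) \<cdot>\<^sub>v e j" and x: "x \<in> carrier_vec n"
  shows "cinner x (P *\<^sub>v x) = of_real (\<Sum>j<n. s j * (cmod (cinner (e j) x))\<^sup>2)"
proof -
  have Pc: "P \<in> carrier_mat n n" using H unfolding hermitian_def by auto
  have ec: "\<forall>j<n. e j \<in> carrier_vec n" using oe by (simp add: orthonormal_carrier)
  have "P *\<^sub>v x = P *\<^sub>v lc n n (\<lambda>j. cinner (e j) x) e" using basis_expand[OF oe x] by simp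
  also have "\<dots> = lc n n (\<lambda>j. cinner (e j) x) (\<lambda>j. P *\<^sub>v e j)" by (rule mat_lc[OF Pc ec])
  also have "\<dots> = lc n n (\<lambda>j. cinner (e j) x) (\<lambda>j. complex_of_real (s j) \<cdot>\<^sub>v e j)"
    unfolding lc_def using ev by (auto intro!: eq_vecI sum.cong)
  also have "\<dots> = lc n n (\<lambda>j. cinner (e j) x * complex_of_real (s j)) e" by (rule lc_smult_vecs[OF ec])
  finally have "cinner x (P *\<^sub>v x) = (\<Sum>j<n. cinner (e j) x * complex_of_real (s j) * cinner x (e j))"
    using x ec by (simp add: cinner_lc_right)
  also have "\<dots> = (\<Sum>j<n. complex_of_real (s j) * (cnj (cinner (e j) x) * cinner (e j) x))"
  proof (rule sum.cong)
    fix j assume "j \<in> {..<n}"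
    hence "cinner x (e j) = cnj (cinner (e j) x)" using ec x by (simp add: cinner_swap[OF _ x])
    thus "cinner (e j) x * complex_of_real (s j) * cinner x (e j) = complex_of_real (s j) * (cnj (cinner (e j) x) * cinner (e j) x)"
      by simp
  qed simp
  also have "\<dots> = of_real (\<Sum>j<n. s j * (cmod (cinner (e j) x))\<^sup>2)"
    unfolding cmod_sq_eq by (simp add: of_real_sum)
  finally show ?thesis .
qed

lemma psd_quad_sum: assumes H: "hermitian n P" and oe: "orthonormal n n e"
  and ev: "\<forall>j<n. P *\<^sub>v e j = complex_of_real (s j) \<cdot>\<^sub>v e j" and oq: "orthonormal n k q"
  shows "(\<Sum>i<k. cinner (q i) (P *\<^sub>v q i)) = of_real (\<Sum>j<n. s j * (\<Sum>i<k. (cmod (cinner (e j) (q i)))\<^sup>2))"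
proof -
  have qc: "\<And>i. i < k \<Longrightarrow> q i \<in> carrier_vec n" using oq by (simp add: orthonormal_carrier)
  have "(\<Sum>i<k. cinner (q i) (P *\<^sub>v q i)) = (\<Sum>i<k. of_real (\<Sum>j<n. s j * (cmod (cinner (e j) (q i)))\<^sup>2))"
    using psd_quad[OF H oe ev] qc by simp
  also have "\<dots> = of_real (\<Sum>i<k. \<Sum>j<n. s j * (cmod (cinner (e j) (q i)))\<^sup>2)" by (simp add: of_real_sum)
  also have "(\<Sum>i<k. \<Sum>j<n. s j * (cmod (cinner (e j) (q i)))\<^sup>2) = (\<Sum>j<n. \<Sum>i<k. s j * (cmod (cinner (e j) (q i)))\<^sup>2)"
    by (rule sum.swap)
  also have "\<dots> = (\<Sum>j<n. s j * (\<Sum>i<k. (cmod (cinner (e j) (q i)))\<^sup>2))" by (simp add: sum_distrib_left)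
  finally show ?thesis .
qed

lemma vec_eq_of_minus_zero: assumes "(x::complex vec) \<in> carrier_vec n" "y \<in> carrier_vec n" "x - y = 0\<^sub>v n"
  shows "x = y"
proof (rule eq_vecI)
  fix i assume i: "i < dim_vec y"
  have "x $ i - y $ i = (x - y) $ i" using i by (rule index_minus_vec(1)[symmetric])
  also have "\<dots> = 0\<^sub>v n $ i" by (simp only: assms(3))
  also have "\<dots> = 0" using i assms by (simp add: carrier_vecD)
  finally show "x $ i = y $ i" by simp
qed (use assms in simp)

lemma beta_analysis:
  assumes P: "psd_mat n P" and oe: "orthonormal n n e"
    and ev: "\<forall>j<n. P *\<^sub>v e j = complex_of_real (s j) \<cdot>\<^sub>v e j"
    and desc: "\<forall>i j. i \<le> j \<longrightarrow> j < n \<longrightarrow> s j \<le> s i" and s0: "\<forall>j<n. s j \<ge> 0"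
    and kn: "k \<le> n" and k1: "1 \<le> k"
    and oq: "orthonormal n k q"
    and eq: "(\<Sum>i<k. cinner (q i) (P *\<^sub>v q i)) = of_real (\<Sum>j<k. s j)"
  shows "\<forall>j<n. (s j < s (k - 1) \<longrightarrow> (\<forall>i<k. cinner (e j) (q i) = 0)) \<and>
               (s j > s (k - 1) \<longrightarrow> e j = lc n k (\<lambda>i. cinner (q i) (e j)) q)"
proof -
  have H: "hermitian n P" by (rule psd_hermitian[OF P])
  have ec: "\<And>j. j < n \<Longrightarrow> e j \<in> carrier_vec n" using oe by (simp add: orthonormal_carrier)
  have qc: "\<And>i. i < k \<Longrightarrow> q i \<in> carrier_vec n" using oq by (simp add: orthonormal_carrier)
  define bet where "bet = (\<lambda>j. \<Sum>i<k. (cmod (cinner (e j) (q i)))\<^sup>2)"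
  have bet_alt: "bet j = (\<Sum>i<k. (cmod (cinner (q i) (e j)))\<^sup>2)" if j: "j < n" for j
    unfolding bet_def using qc ec[OF j] by (auto intro!: sum.cong simp: cmod_cnj_cinner[of _ n])
  have "of_real (\<Sum>j<n. s j * bet j) = (of_real (\<Sum>j<k. s j) :: complex)"
    using psd_quad_sum[OF H oe ev oq] eq unfolding bet_def by simp
  hence sumeq: "(\<Sum>j<n. s j * bet j) = (\<Sum>j<k. s j)" by (simp only: of_real_eq_iff)
  have b01: "\<forall>j<n. 0 \<le> bet j \<and> bet j \<le> 1"
  proof (intro allI impI conjI)
    fix j assume j: "j < n"
    show "0 \<le> bet j" unfolding bet_def by (auto intro: sum_nonneg)
    have "bet j \<le> Re (cinner (e j) (e j))" using bessel[OF oq ec[OF j]] bet_alt[OF j] by simp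
    thus "bet j \<le> 1" using oe j by (simp add: orthonormal_inner)
  qed
  have bsum: "(\<Sum>j<n. bet j) \<le> real k"
  proof -
    have "(\<Sum>j<n. bet j) = (\<Sum>i<k. \<Sum>j<n. (cmod (cinner (e j) (q i)))\<^sup>2)" unfolding bet_def by (rule sum.swap)
    also have "\<dots> = (\<Sum>i<k. Re (cinner (q i) (q i)))" using parseval_real[OF oe] qc by simp
    also have "\<dots> = real k" using oq by (simp add: orthonormal_inner)
    finally show ?thesis by simp
  qed
  have R: "\<forall>j<n. (s j > s (k - 1) \<longrightarrow> bet j = 1) \<and> (s j < s (k - 1) \<longrightarrow> bet j = 0)"
    by (rule rearr(2)[OF kn k1 desc s0 b01 bsum sumeq])
  show ?thesis
  proof (intro allI impI)
    fix j assume j: "j < n"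
    show "(s j < s (k - 1) \<longrightarrow> (\<forall>i<k. cinner (e j) (q i) = 0)) \<and>
          (s j > s (k - 1) \<longrightarrow> e j = lc n k (\<lambda>i. cinner (q i) (e j)) q)"
    proof (intro conjI impI)
      assume sj: "s j < s (k - 1)"
      hence "bet j = 0" using R j by simp
      hence "\<forall>i\<in>{..<k}. (cmod (cinner (e j) (q i)))\<^sup>2 = 0"
        using sum_nonneg_eq_0_iff[of "{..<k}" "\<lambda>i. (cmod (cinner (e j) (q i)))\<^sup>2"] unfolding bet_def by simp
      thus "\<forall>i<k. cinner (e j) (q i) = 0" by simp
    next
      assume sj: "s j > s (k - 1)"
      hence b1: "bet j = 1" using R j by simp
      let ?z = "resid n k q (e j)"
      have zc: "?z \<in> carrier_vec n" using resid_carrier[OF ec[OF j]] .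
      have "cinner ?z ?z = cinner (e j) (e j) - (\<Sum>i<k. cnj (cinner (q i) (e j)) * cinner (q i) (e j))"
        by (rule resid_norm[OF oq ec[OF j]])
      also have "(\<Sum>i<k. cnj (cinner (q i) (e j)) * cinner (q i) (e j)) = of_real (bet j)"
        unfolding bet_alt[OF j] cmod_sq_eq by (simp add: of_real_sum)
      finally have "cinner ?z ?z = 0" using b1 oe j by (simp add: orthonormal_inner)
      hence "?z = 0\<^sub>v n" by (rule cinner_self_zero[OF zc])
      thus "e j = lc n k (\<lambda>i. cinner (q i) (e j)) q"
        unfolding resid_def by (rule vec_eq_of_minus_zero[OF ec[OF j] lc_carrier])
    qed
  qed
qed

lemma y_eq_q:
  assumes P: "psd_mat n P" and oe: "orthonormal n n e"
    and ev: "\<forall>j<n. P *\<^sub>v e j = complex_of_real (s j) \<cdot>\<^sub>v e j"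
    and desc: "\<forall>i j. i \<le> j \<longrightarrow> j < n \<longrightarrow> s j \<le> s i" and s0: "\<forall>j<n. s j \<ge> 0"
    and kn: "k \<le> n" and k1: "1 \<le> k" and pos: "s (k - 1) > 0"
    and oq: "orthonormal n k q" and oy: "orthonormal n k y"
    and eq: "(\<Sum>i<k. cinner (y i) (P *\<^sub>v q i)) = of_real (\<Sum>j<k. s j)"
  shows "\<forall>i<k. y i = q i" "(\<Sum>i<k. cinner (q i) (P *\<^sub>v q i)) = of_real (\<Sum>j<k. s j)"
proof -
  have H: "hermitian n P" by (rule psd_hermitian[OF P])
  have Pc: "P \<in> carrier_mat n n" using P unfolding psd_mat_def by auto
  have Ph: "\<And>x z. x \<in> carrier_vec n \<Longrightarrow> z \<in> carrier_vec n \<Longrightarrow> cinner x (P *\<^sub>v z) = cinner (P *\<^sub>v x) z"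
    using H unfolding hermitian_def by auto
  have Pq: "\<And>x. x \<in> carrier_vec n \<Longrightarrow> Im (cinner x (P *\<^sub>v x)) = 0 \<and> Re (cinner x (P *\<^sub>v x)) \<ge> 0"
    using P unfolding psd_mat_def by auto
  have ec: "\<And>j. j < n \<Longrightarrow> e j \<in> carrier_vec n" using oe by (simp add: orthonormal_carrier)
  have qc: "\<And>i. i < k \<Longrightarrow> q i \<in> carrier_vec n" using oq by (simp add: orthonormal_carrier)
  have yc: "\<And>i. i < k \<Longrightarrow> y i \<in> carrier_vec n" using oy by (simp add: orthonormal_carrier)
  let ?S = "\<Sum>j<k. s j"
  have Pe: "\<forall>j<n. P *\<^sub>v e j = complex_of_real (s j) \<cdot>\<^sub>v e j" using ev by simp
  have bnd: "Re (\<Sum>i<k. cinner (x i) (P *\<^sub>v x i)) \<le> ?S" if ox: "orthonormal n k x" for x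
  proof -
    have "cmod (\<Sum>i<k. cinner (x i) (P *\<^sub>v x i)) \<le> ?S"
      by (rule kf_core[OF Pc oe oe Pe s0 desc kn k1 ox ox])
    thus ?thesis using complex_Re_le_cmod order_trans by blast
  qed
  define d where "d = (\<lambda>i. y i - q i)"
  have dc: "\<And>i. i < k \<Longrightarrow> d i \<in> carrier_vec n" unfolding d_def using yc qc by simp
  have dquad: "Re (cinner (d i) (P *\<^sub>v d i)) =
      Re (cinner (y i) (P *\<^sub>v y i)) + Re (cinner (q i) (P *\<^sub>v q i)) - 2 * Re (cinner (y i) (P *\<^sub>v q i))"
    if i: "i < k" for i
  proof -
    have yi: "y i \<in> carrier_vec n" and qi: "q i \<in> carrier_vec n" using yc qc i by auto
    have Py: "P *\<^sub>v y i \<in> carrier_vec n" and Pq': "P *\<^sub>v q i \<in> carrier_vec n" using Pc yi qi by auto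
    have "P *\<^sub>v d i = P *\<^sub>v y i - P *\<^sub>v q i" unfolding d_def by (rule mult_minus_distrib_mat_vec[OF Pc yi qi])
    hence "cinner (d i) (P *\<^sub>v d i) = cinner (y i) (P *\<^sub>v y i) - cinner (y i) (P *\<^sub>v q i)
        - (cinner (q i) (P *\<^sub>v y i) - cinner (q i) (P *\<^sub>v q i))"
      unfolding d_def using yi qi Py Pq'
      by (simp add: cinner_minus_left[of _ n] cinner_minus_right[of _ n])
    moreover have "cinner (q i) (P *\<^sub>v y i) = cnj (cinner (y i) (P *\<^sub>v q i))"
    proof -
      have "cinner (q i) (P *\<^sub>v y i) = cinner (P *\<^sub>v q i) (y i)" by (rule Ph[OF qi yi])
      also have "\<dots> = cnj (cinner (y i) (P *\<^sub>v q i))" by (rule cinner_swap[OF yi Pq'])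
      finally show ?thesis .
    qed
    ultimately show ?thesis by simp
  qed
  have yqS: "(\<Sum>i<k. Re (cinner (y i) (P *\<^sub>v q i))) = ?S" using arg_cong[OF eq, of Re] by (simp add: Re_sum)
  have "(\<Sum>i<k. Re (cinner (d i) (P *\<^sub>v d i))) =
     (\<Sum>i<k. Re (cinner (y i) (P *\<^sub>v y i)) + Re (cinner (q i) (P *\<^sub>v q i)) - 2 * Re (cinner (y i) (P *\<^sub>v q i)))"
    using dquad by (intro sum.cong) auto
  also have "\<dots> = (\<Sum>i<k. Re (cinner (y i) (P *\<^sub>v y i))) + (\<Sum>i<k. Re (cinner (q i) (P *\<^sub>v q i)))
      - 2 * (\<Sum>i<k. Re (cinner (y i) (P *\<^sub>v q i)))"
    by (simp add: sum.distrib sum_subtractf sum_distrib_left)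
  finally have sumd: "(\<Sum>i<k. Re (cinner (d i) (P *\<^sub>v d i))) =
     Re (\<Sum>i<k. cinner (y i) (P *\<^sub>v y i)) + Re (\<Sum>i<k. cinner (q i) (P *\<^sub>v q i)) - 2 * ?S"
    unfolding yqS by (simp add: Re_sum)
  have by': "Re (\<Sum>i<k. cinner (y i) (P *\<^sub>v y i)) \<le> ?S" by (rule bnd[OF oy])
  have bq: "Re (\<Sum>i<k. cinner (q i) (P *\<^sub>v q i)) \<le> ?S" by (rule bnd[OF oq])
  have dnn: "\<forall>i\<in>{..<k}. Re (cinner (d i) (P *\<^sub>v d i)) \<ge> 0" using Pq dc by simp
  hence "(\<Sum>i<k. Re (cinner (d i) (P *\<^sub>v d i))) \<ge> 0" by (auto intro: sum_nonneg)
  hence dz: "(\<Sum>i<k. Re (cinner (d i) (P *\<^sub>v d i))) = 0" and qS: "Re (\<Sum>i<k. cinner (q i) (P *\<^sub>v q i)) = ?S"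
    using sumd by' bq by linarith+
  have dzi: "\<forall>i\<in>{..<k}. Re (cinner (d i) (P *\<^sub>v d i)) = 0"
    using sum_nonneg_eq_0_iff[of "{..<k}" "\<lambda>i. Re (cinner (d i) (P *\<^sub>v d i))"] dz dnn by blast
  have imq: "Im (\<Sum>i<k. cinner (q i) (P *\<^sub>v q i)) = 0" using Pq qc by (simp add: Im_sum)
  show qeq: "(\<Sum>i<k. cinner (q i) (P *\<^sub>v q i)) = of_real ?S" using qS imq by (simp add: complex_eq_iff)
  have BA: "\<forall>j<n. (s j < s (k - 1) \<longrightarrow> (\<forall>i<k. cinner (e j) (q i) = 0)) \<and>
               (s j > s (k - 1) \<longrightarrow> e j = lc n k (\<lambda>i. cinner (q i) (e j)) q)"
    by (rule beta_analysis[OF P oe ev desc s0 kn k1 oq qeq])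
  show "\<forall>i<k. y i = q i"
  proof (intro allI impI)
    fix i assume i: "i < k"
    have di: "d i \<in> carrier_vec n" using dc[OF i] .
    have "Re (cinner (d i) (P *\<^sub>v d i)) = (\<Sum>j<n. s j * (cmod (cinner (e j) (d i)))\<^sup>2)"
      by (subst psd_quad[OF H oe ev di]) (simp only: Re_complex_of_real)
    hence "(\<Sum>j<n. s j * (cmod (cinner (e j) (d i)))\<^sup>2) = 0" using dzi i by simp
    hence "\<forall>j\<in>{..<n}. s j * (cmod (cinner (e j) (d i)))\<^sup>2 = 0"
      using sum_nonneg_eq_0_iff[of "{..<n}" "\<lambda>j. s j * (cmod (cinner (e j) (d i)))\<^sup>2"] s0 by simp
    hence ed: "\<And>j. j < n \<Longrightarrow> s j > 0 \<Longrightarrow> cinner (e j) (d i) = 0" by force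
    have "cinner (q i) (d i) = (\<Sum>j<n. cinner (q i) (e j) * cinner (e j) (d i))"
      by (rule parseval[OF oe qc[OF i] di])
    also have "\<dots> = 0"
    proof (rule sum.neutral, intro ballI)
      fix j assume "j \<in> {..<n}"
      hence j: "j < n" by simp
      show "cinner (q i) (e j) * cinner (e j) (d i) = 0"
      proof (cases "s j < s (k - 1)")
        case True
        hence "cinner (e j) (q i) = 0" using BA j i by blast
        hence "cinner (q i) (e j) = 0" using cinner_swap[OF qc[OF i] ec[OF j]] by simp
        thus ?thesis by simp
      next
        case False
        hence "s j > 0" using pos by simp
        thus ?thesis using ed[OF j] by simp
      qed
    qed
    finally have qd: "cinner (q i) (d i) = 0" .
    have dq: "cinner (d i) (q i) = 0" using cinner_swap[OF qc[OF i] di] qd by simp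
    have yqd: "y i = q i + d i"
      unfolding d_def using yc[OF i] qc[OF i] by (auto intro!: eq_vecI)
    have "cinner (y i) (y i) = cinner (q i) (q i) + cinner (q i) (d i) + (cinner (d i) (q i) + cinner (d i) (d i))"
      unfolding yqd using qc[OF i] di by (simp add: cinner_add_left[of _ n] cinner_add_right[of _ n])
    hence "cinner (d i) (d i) = 0" using qd dq oq oy i by (simp add: orthonormal_inner)
    hence "d i = 0\<^sub>v n" by (rule cinner_self_zero[OF di])
    thus "y i = q i" unfolding d_def by (rule vec_eq_of_minus_zero[OF yc[OF i] qc[OF i]])
  qed
qed



lemma sum_split_lessThan: fixes g :: "nat \<Rightarrow> 'a::comm_monoid_add"
  assumes "k \<le> n" shows "(\<Sum>j<n. g j) = (\<Sum>j<k. g j) + (\<Sum>j\<in>{k..<n}. g j)"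
  using sum.atLeastLessThan_concat[of 0 k n g] assms by (simp add: atLeast0LessThan)

definition pmat :: "nat \<Rightarrow> nat \<Rightarrow> (nat \<Rightarrow> complex vec) \<Rightarrow> complex mat" where
  "pmat n k q = mat n n (\<lambda>(a,b). \<Sum>l<k. q l $ a * cnj (q l $ b))"

lemma pmat_carrier[simp]: "pmat n k q \<in> carrier_mat n n" "dim_row (pmat n k q) = n" "dim_col (pmat n k q) = n"
  unfolding pmat_def by simp_all

lemma pmat_mult: assumes qc: "\<forall>l<k. q l \<in> carrier_vec n" and x: "x \<in> carrier_vec n"
  shows "pmat n k q *\<^sub>v x = lc n k (\<lambda>l. cinner (q l) x) q"
proof (rule eq_vecI)
  fix a assume "a < dim_vec (lc n k (\<lambda>l. cinner (q l) x) q)"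
  hence a: "a < n" by simp
  have "(pmat n k q *\<^sub>v x) $ a = (\<Sum>b<n. (\<Sum>l<k. q l $ a * cnj (q l $ b)) * x $ b)"
    using a x by (auto simp: pmat_def scalar_prod_def lessThan_atLeast0 intro!: sum.cong)
  also have "\<dots> = (\<Sum>b<n. \<Sum>l<k. q l $ a * (cnj (q l $ b) * x $ b))"
    by (simp add: sum_distrib_right mult.assoc)
  also have "\<dots> = (\<Sum>l<k. \<Sum>b<n. q l $ a * (cnj (q l $ b) * x $ b))" by (rule sum.swap)
  also have "\<dots> = (\<Sum>l<k. cinner (q l) x * q l $ a)"
    using qc x by (auto simp: cinner_sum[of _ n] sum_distrib_left mult.commute intro!: sum.cong)
  also have "\<dots> = lc n k (\<lambda>l. cinner (q l) x) q $ a" using a by (simp add: lc_index)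
  finally show "(pmat n k q *\<^sub>v x) $ a = lc n k (\<lambda>l. cinner (q l) x) q $ a" .
qed (use x in simp)

lemma pmat_adj: "adj (pmat n k q) = pmat n k q"
proof (rule eq_matI)
  have c: "adj (pmat n k q) \<in> carrier_mat n n" by (rule adj_carrier) simp
  show "dim_row (adj (pmat n k q)) = dim_row (pmat n k q)" "dim_col (adj (pmat n k q)) = dim_col (pmat n k q)"
    using c by auto
  fix i j assume "i < dim_row (pmat n k q)" "j < dim_col (pmat n k q)"
  thus "adj (pmat n k q) $$ (i, j) = pmat n k q $$ (i, j)"
    by (simp add: index_adj[of _ n n] pmat_def mult.commute)
qed

lemma pmat_herm: "hermitian n (pmat n k q)"
  by (rule adj_hermitian) (simp_all add: pmat_adj)

lemma pmat_sym: "x \<in> carrier_vec n \<Longrightarrow> z \<in> carrier_vec n \<Longrightarrow>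
  cinner x (pmat n k q *\<^sub>v z) = cinner (pmat n k q *\<^sub>v x) z"
  using pmat_herm[of n k q] unfolding hermitian_def by auto

lemma pmat_fix: assumes oq: "orthonormal n k q" and i: "i < k"
  shows "pmat n k q *\<^sub>v q i = q i"
proof -
  have qc: "\<forall>l<k. q l \<in> carrier_vec n" using oq by (simp add: orthonormal_carrier)
  have "pmat n k q *\<^sub>v q i = lc n k (\<lambda>l. cinner (q l) (q i)) q" using pmat_mult[OF qc] qc i by simp
  also have "\<dots> = lc n k (\<lambda>l. if l = i then 1 else 0) q"
    by (rule lc_cong) (use oq i in \<open>simp add: orthonormal_inner\<close>)
  also have "\<dots> = 1 \<cdot>\<^sub>v q i" by (rule lc_delta[OF i]) (use qc i in simp)
  finally show ?thesis using qc i by simp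
qed

lemma pmat_idem: assumes oq: "orthonormal n k q" and x: "x \<in> carrier_vec n"
  shows "pmat n k q *\<^sub>v (pmat n k q *\<^sub>v x) = pmat n k q *\<^sub>v x"
proof -
  have qc: "\<forall>l<k. q l \<in> carrier_vec n" using oq by (simp add: orthonormal_carrier)
  have "pmat n k q *\<^sub>v (pmat n k q *\<^sub>v x) = lc n k (\<lambda>l. cinner (q l) x) (\<lambda>l. pmat n k q *\<^sub>v q l)"
    using pmat_mult[OF qc x] mat_lc[OF pmat_carrier(1) qc] by simp
  also have "\<dots> = lc n k (\<lambda>l. cinner (q l) x) q" unfolding lc_def using pmat_fix[OF oq] by (auto intro!: eq_vecI sum.cong)
  finally show ?thesis using pmat_mult[OF qc x] by simp
qed

lemma lc_mat_partial: assumes M: "M \<in> carrier_mat n n" and vc: "\<forall>j<m. v j \<in> carrier_vec n"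
  and h: "\<forall>j<m. g j = 0 \<or> M *\<^sub>v v j = v j"
  shows "M *\<^sub>v lc n m g v = lc n m g v"
proof -
  have "M *\<^sub>v lc n m g v = lc n m g (\<lambda>j. M *\<^sub>v v j)" by (rule mat_lc[OF M vc])
  also have "\<dots> = lc n m g v" unfolding lc_def
  proof (rule eq_vecI)
    fix a assume "a < dim_vec (vec n (\<lambda>a. \<Sum>j<m. g j * v j $ a))"
    hence a: "a < n" by simp
    have "\<And>j. j < m \<Longrightarrow> g j * (M *\<^sub>v v j) $ a = g j * v j $ a" using h by auto
    thus "vec n (\<lambda>a. \<Sum>j<m. g j * (M *\<^sub>v v j) $ a) $ a = vec n (\<lambda>a. \<Sum>j<m. g j * v j $ a) $ a"
      using a by (auto intro!: sum.cong)
  qed simp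
  finally show ?thesis .
qed

lemma interlacing:
  assumes H: "hermitian n P" and oe: "orthonormal n n e"
    and ev: "\<forall>j<n. P *\<^sub>v e j = complex_of_real (s j) \<cdot>\<^sub>v e j"
    and desc: "\<forall>i j. i \<le> j \<longrightarrow> j < n \<longrightarrow> s j \<le> s i"
    and kn: "k \<le> n" and of: "orthonormal n k f"
    and evf: "\<forall>i<k. P *\<^sub>v f i = complex_of_real (mu i) \<cdot>\<^sub>v f i"
    and descf: "\<forall>i j. i \<le> j \<longrightarrow> j < k \<longrightarrow> mu j \<le> mu i"
    and i: "i < k"
  shows "mu i \<le> s i"
proof (rule ccontr)
  assume "\<not> mu i \<le> s i"
  hence gt: "mu i > s i" by simp
  have ec: "\<And>j. j < n \<Longrightarrow> e j \<in> carrier_vec n" using oe by (simp add: orthonormal_carrier)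
  have fc: "\<And>l. l < k \<Longrightarrow> f l \<in> carrier_vec n" using of by (simp add: orthonormal_carrier)
  have zero: "cinner (e j) (f l) = 0" if l: "l \<le> i" and j: "i \<le> j" "j < n" for l j
  proof -
    have lk: "l < k" using l i by simp
    have "mu l \<ge> mu i" using descf l i by simp
    moreover have "s j \<le> s i" using desc j by simp
    ultimately have ne: "mu l \<noteq> s j" using gt by simp
    have "of_real (s j) * cinner (e j) (f l) = cinner (e j) (P *\<^sub>v f l)"
      using cinner_herm_eig[OF H ec[OF j(2)] _ fc[OF lk]] ev j by simp
    also have "\<dots> = of_real (mu l) * cinner (e j) (f l)" using evf lk ec[OF j(2)] fc[OF lk]
      by (simp add: cinner_smult_right[of _ n])
    finally have "(of_real (s j) - of_real (mu l)) * cinner (e j) (f l) = 0" by (simp add: algebra_simps)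
    thus ?thesis using ne by simp
  qed
  have one: "(\<Sum>j<i. (cmod (cinner (e j) (f l)))\<^sup>2) = 1" if l: "l \<le> i" for l
  proof -
    have lk: "l < k" using l i by simp
    have "(\<Sum>j<n. (cmod (cinner (e j) (f l)))\<^sup>2) = Re (cinner (f l) (f l))" by (rule parseval_real[OF oe fc[OF lk]])
    also have "\<dots> = 1" using of lk by (simp add: orthonormal_inner)
    also have "(\<Sum>j<n. (cmod (cinner (e j) (f l)))\<^sup>2) = (\<Sum>j<i. (cmod (cinner (e j) (f l)))\<^sup>2) + (\<Sum>j\<in>{i..<n}. (cmod (cinner (e j) (f l)))\<^sup>2)"
      by (rule sum_split_lessThan) (use i kn in simp)
    also have "(\<Sum>j\<in>{i..<n}. (cmod (cinner (e j) (f l)))\<^sup>2) = 0" using zero[OF l] by (intro sum.neutral) auto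
    finally show ?thesis by simp
  qed
  have "real (Suc i) = (\<Sum>l<Suc i. (\<Sum>j<i. (cmod (cinner (e j) (f l)))\<^sup>2))" using one by simp
  also have "\<dots> = (\<Sum>j<i. \<Sum>l<Suc i. (cmod (cinner (f l) (e j)))\<^sup>2)"
    by (subst sum.swap) (use fc ec i kn in \<open>auto intro!: sum.cong simp: cmod_cnj_cinner[of _ n]\<close>)
  also have "\<dots> \<le> (\<Sum>j<i. Re (cinner (e j) (e j)))"
  proof (rule sum_mono)
    fix j assume "j \<in> {..<i}"
    hence j: "j < n" using i kn by simp
    show "(\<Sum>l<Suc i. (cmod (cinner (f l) (e j)))\<^sup>2) \<le> Re (cinner (e j) (e j))"
      by (rule bessel[OF orthonormal_mono[OF of] ec[OF j]]) (use i in simp)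
  qed
  also have "\<dots> = real i" using oe i kn by (simp add: orthonormal_inner)
  finally show False by simp
qed

lemma trace_eq:
  assumes oq: "orthonormal n k q" and of: "orthonormal n n f" and kn: "k \<le> n"
    and fin: "\<forall>i<k. pmat n k q *\<^sub>v f i = f i"
    and fout: "\<forall>j. k \<le> j \<longrightarrow> j < n \<longrightarrow> pmat n k q *\<^sub>v f j = 0\<^sub>v n"
    and M: "M \<in> carrier_mat n n"
  shows "(\<Sum>i<k. cinner (f i) (M *\<^sub>v f i)) = (\<Sum>l<k. cinner (q l) (M *\<^sub>v q l))"
proof -
  have qc: "\<forall>l<k. q l \<in> carrier_vec n" using oq by (simp add: orthonormal_carrier)
  have fc: "\<And>j. j < n \<Longrightarrow> f j \<in> carrier_vec n" using of by (simp add: orthonormal_carrier)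
  have fck: "\<forall>i<k. f i \<in> carrier_vec n" using fc kn by simp
  have fexp: "f i = lc n k (\<lambda>l. cinner (q l) (f i)) q" if i: "i < k" for i
  proof -
    have e1: "pmat n k q *\<^sub>v f i = f i" using fin i by blast
    have e2: "pmat n k q *\<^sub>v f i = lc n k (\<lambda>l. cinner (q l) (f i)) q"
      by (rule pmat_mult[OF qc fck[rule_format, OF i]])
    show ?thesis by (rule trans[OF e1[symmetric] e2])
  qed
  have qexp: "q l = lc n k (\<lambda>i. cinner (f i) (q l)) f" if l: "l < k" for l
  proof -
    have ql: "q l \<in> carrier_vec n" using qc l by simp
    have z: "cinner (f j) (q l) = 0" if j: "k \<le> j" "j < n" for j
    proof -
      have "cinner (q l) (f j) = cinner (q l) (pmat n k q *\<^sub>v f j)"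
        using pmat_mult[OF qc fc[OF j(2)]] orthonormal_coeff[OF oq l] by simp
      also have "\<dots> = 0" using fout j ql by simp
      finally show ?thesis using cinner_swap[OF ql fc[OF j(2)]] by simp
    qed
    have "q l = lc n n (\<lambda>j. cinner (f j) (q l)) f" by (rule basis_expand[OF of ql])
    also have "\<dots> = lc n k (\<lambda>i. cinner (f i) (q l)) f"
    proof -
      have split: "\<And>a. (\<Sum>j<n. cinner (f j) (q l) * f j $ a) =
         (\<Sum>j<k. cinner (f j) (q l) * f j $ a) + (\<Sum>j\<in>{k..<n}. cinner (f j) (q l) * f j $ a)"
        by (rule sum_split_lessThan[OF kn])
      have "\<And>a. (\<Sum>j\<in>{k..<n}. cinner (f j) (q l) * f j $ a) = 0" using z by (intro sum.neutral) auto
      thus ?thesis unfolding lc_def using split by simp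
    qed
    finally show ?thesis .
  qed
  have "(\<Sum>i<k. cinner (f i) (M *\<^sub>v f i)) = (\<Sum>i<k. \<Sum>l<k. cinner (q l) (f i) * cinner (f i) (M *\<^sub>v q l))"
  proof (rule sum.cong)
    fix i assume "i \<in> {..<k}"
    hence i: "i < k" by simp
    have "M *\<^sub>v f i = M *\<^sub>v lc n k (\<lambda>l. cinner (q l) (f i)) q"
      by (rule arg_cong[where f = "\<lambda>z. M *\<^sub>v z"], rule fexp[OF i])
    also have "\<dots> = lc n k (\<lambda>l. cinner (q l) (f i)) (\<lambda>l. M *\<^sub>v q l)" by (rule mat_lc[OF M qc])
    finally have "M *\<^sub>v f i = lc n k (\<lambda>l. cinner (q l) (f i)) (\<lambda>l. M *\<^sub>v q l)" .
    thus "cinner (f i) (M *\<^sub>v f i) = (\<Sum>l<k. cinner (q l) (f i) * cinner (f i) (M *\<^sub>v q l))"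
      using fck i M qc by (simp add: cinner_lc_right)
  qed simp
  also have "\<dots> = (\<Sum>l<k. \<Sum>i<k. cinner (q l) (f i) * cinner (f i) (M *\<^sub>v q l))" by (rule sum.swap)
  also have "\<dots> = (\<Sum>l<k. cinner (q l) (M *\<^sub>v q l))"
  proof (rule sum.cong)
    fix l assume "l \<in> {..<k}"
    hence l: "l < k" by simp
    have Mq: "M *\<^sub>v q l \<in> carrier_vec n" using M qc l by simp
    have "cinner (q l) (M *\<^sub>v q l) = cinner (lc n k (\<lambda>i. cinner (f i) (q l)) f) (M *\<^sub>v q l)"
      by (rule arg_cong[where f = "\<lambda>z. cinner z (M *\<^sub>v q l)"], rule qexp[OF l])
    also have "\<dots> = (\<Sum>i<k. cnj (cinner (f i) (q l)) * cinner (f i) (M *\<^sub>v q l))"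
      by (rule cinner_lc_left[OF Mq fck])
    also have "\<dots> = (\<Sum>i<k. cinner (q l) (f i) * cinner (f i) (M *\<^sub>v q l))"
      using fck qc l by (auto intro!: sum.cong simp: cinner_swap[of "q l" n])
    finally show "(\<Sum>i<k. cinner (q l) (f i) * cinner (f i) (M *\<^sub>v q l)) = cinner (q l) (M *\<^sub>v q l)" by simp
  qed simp
  finally show ?thesis .
qed



lemma count_sorted:
  fixes mu :: "nat \<Rightarrow> real"
  assumes kn: "k \<le> n" and desc: "\<forall>i j. i \<le> j \<longrightarrow> j < n \<longrightarrow> mu j \<le> mu i"
    and vals: "\<forall>j<n. mu j = -1 \<or> mu j \<ge> 0"
    and cnt: "(\<Sum>j<n. (if mu j = -1 then 0 else 1 :: real)) = real k"
  shows "\<forall>j<k. mu j \<noteq> -1" "\<forall>j. k \<le> j \<longrightarrow> j < n \<longrightarrow> mu j = -1"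
proof -
  let ?t = "\<lambda>j. (if mu j = -1 then 0 else 1 :: real)"
  have t01: "\<And>j. 0 \<le> ?t j \<and> ?t j \<le> 1" by simp
  show "\<forall>j<k. mu j \<noteq> -1"
  proof (rule ccontr)
    assume "\<not> (\<forall>j<k. mu j \<noteq> -1)"
    then obtain j0 where j0: "j0 < k" "mu j0 = -1" by auto
    have z: "?t j = 0" if "j \<in> {j0..<n}" for j
    proof -
      have "mu j \<le> mu j0" using desc that by auto
      thus ?thesis using vals that j0 by force
    qed
    have "(\<Sum>j<n. ?t j) = (\<Sum>j<j0. ?t j) + (\<Sum>j\<in>{j0..<n}. ?t j)"
      by (rule sum_split_lessThan) (use j0 kn in simp)
    also have "(\<Sum>j\<in>{j0..<n}. ?t j) = 0" using z by (intro sum.neutral) blast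
    also have "(\<Sum>j<j0. ?t j) \<le> (\<Sum>j<j0. 1)" by (intro sum_mono) simp
    finally have "real k \<le> real j0" using cnt by simp
    thus False using j0 by simp
  qed
  show "\<forall>j. k \<le> j \<longrightarrow> j < n \<longrightarrow> mu j = -1"
  proof (rule ccontr)
    assume "\<not> (\<forall>j. k \<le> j \<longrightarrow> j < n \<longrightarrow> mu j = -1)"
    then obtain j0 where j0: "k \<le> j0" "j0 < n" "mu j0 \<noteq> -1" by auto
    have mj0: "mu j0 \<ge> 0" using vals j0 by auto
    have o: "?t j = 1" if "j \<in> {..<Suc j0}" for j
    proof -
      have "mu j \<ge> mu j0" using desc that j0 by auto
      thus ?thesis using mj0 by auto
    qed
    have A: "(\<Sum>j<n. ?t j) = (\<Sum>j<Suc j0. ?t j) + (\<Sum>j\<in>{Suc j0..<n}. ?t j)"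
      by (rule sum_split_lessThan) (use j0 in simp)
    have B: "(\<Sum>j<Suc j0. ?t j) = real (Suc j0)" using o by simp
    have C: "(\<Sum>j\<in>{Suc j0..<n}. ?t j) \<ge> 0" by (intro sum_nonneg) simp
    have "real k \<ge> real (Suc j0)" using cnt A B C by linarith
    thus False using j0 by simp
  qed
qed

lemma only_if_core:
  assumes P: "psd_mat n P" and oe: "orthonormal n n e"
    and ev: "\<forall>j<n. P *\<^sub>v e j = complex_of_real (s j) \<cdot>\<^sub>v e j"
    and desc: "\<forall>i j. i \<le> j \<longrightarrow> j < n \<longrightarrow> s j \<le> s i" and s0: "\<forall>j<n. s j \<ge> 0"
    and kn: "k \<le> n" and k1: "1 \<le> k" and pos: "s (k - 1) > 0"
    and oq: "orthonormal n k q"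
    and qeq: "(\<Sum>i<k. cinner (q i) (P *\<^sub>v q i)) = of_real (\<Sum>j<k. s j)"
  shows "\<exists>f. orthonormal n k f \<and> (\<forall>i<k. P *\<^sub>v f i = complex_of_real (s i) \<cdot>\<^sub>v f i) \<and>
     (\<forall>M\<in>carrier_mat n n. (\<Sum>i<k. cinner (f i) (M *\<^sub>v f i)) = (\<Sum>l<k. cinner (q l) (M *\<^sub>v q l)))"
proof -
  have H: "hermitian n P" by (rule psd_hermitian[OF P])
  have Pc: "P \<in> carrier_mat n n" using P unfolding psd_mat_def by auto
  have Ph: "\<And>x z. x \<in> carrier_vec n \<Longrightarrow> z \<in> carrier_vec n \<Longrightarrow> cinner x (P *\<^sub>v z) = cinner (P *\<^sub>v x) z"
    using H unfolding hermitian_def by auto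
  have Pq: "\<And>x. x \<in> carrier_vec n \<Longrightarrow> Im (cinner x (P *\<^sub>v x)) = 0 \<and> Re (cinner x (P *\<^sub>v x)) \<ge> 0"
    using P unfolding psd_mat_def by auto
  have ec: "\<And>j. j < n \<Longrightarrow> e j \<in> carrier_vec n" using oe by (simp add: orthonormal_carrier)
  have ecv: "\<forall>j<n. e j \<in> carrier_vec n" using ec by simp
  have qc: "\<forall>l<k. q l \<in> carrier_vec n" using oq by (simp add: orthonormal_carrier)
  have qc': "\<And>l. l < k \<Longrightarrow> q l \<in> carrier_vec n" using qc by simp
  have BA: "\<forall>j<n. (s j < s (k - 1) \<longrightarrow> (\<forall>i<k. cinner (e j) (q i) = 0)) \<and>
               (s j > s (k - 1) \<longrightarrow> e j = lc n k (\<lambda>i. cinner (q i) (e j)) q)"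
    by (rule beta_analysis[OF P oe ev desc s0 kn k1 oq qeq])
  define c0 where "c0 = s (k - 1)"
  define Pi where "Pi = pmat n k q"
  have Pic: "Pi \<in> carrier_mat n n" unfolding Pi_def by simp
  have Pim: "\<And>x. x \<in> carrier_vec n \<Longrightarrow> Pi *\<^sub>v x = lc n k (\<lambda>l. cinner (q l) x) q"
    unfolding Pi_def by (rule pmat_mult[OF qc])
  have Pis: "\<And>x z. x \<in> carrier_vec n \<Longrightarrow> z \<in> carrier_vec n \<Longrightarrow> cinner x (Pi *\<^sub>v z) = cinner (Pi *\<^sub>v x) z"
    unfolding Pi_def by (rule pmat_sym)
  have Piq: "\<And>l. l < k \<Longrightarrow> Pi *\<^sub>v q l = q l" unfolding Pi_def by (rule pmat_fix[OF oq])
  have Pii: "\<And>x. x \<in> carrier_vec n \<Longrightarrow> Pi *\<^sub>v (Pi *\<^sub>v x) = Pi *\<^sub>v x" unfolding Pi_def by (rule pmat_idem[OF oq])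
  have Pie: "Pi *\<^sub>v e j = e j" if j: "j < n" and sj: "s j > c0" for j
  proof -
    have "e j = lc n k (\<lambda>i. cinner (q i) (e j)) q" using BA j sj unfolding c0_def by blast
    thus ?thesis using Pim[OF ec[OF j]] by simp
  qed
  have eP: "\<And>j y. j < n \<Longrightarrow> y \<in> carrier_vec n \<Longrightarrow> cinner (e j) (P *\<^sub>v y) = of_real (s j) * cinner (e j) y"
    using cinner_herm_eig[OF H ec] ev by simp
  have invq: "Pi *\<^sub>v (P *\<^sub>v q l) = P *\<^sub>v q l" if l: "l < k" for l
  proof -
    have ql: "q l \<in> carrier_vec n" using qc' l .
    define r where "r = P *\<^sub>v q l - complex_of_real c0 \<cdot>\<^sub>v q l"
    have rc: "r \<in> carrier_vec n" unfolding r_def using Pc ql by simp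
    have cr: "cinner (e j) r = of_real (s j - c0) * cinner (e j) (q l)" if j: "j < n" for j
      unfolding r_def using Pc ql ec[OF j] eP[OF j ql]
      by (simp add: cinner_minus_right[of _ n] cinner_smult_right[of _ n] algebra_simps)
    have "r = lc n n (\<lambda>j. cinner (e j) r) e" by (rule basis_expand[OF oe rc])
    also have "\<dots> = lc n n (\<lambda>j. of_real (s j - c0) * cinner (e j) (q l)) e" by (rule lc_cong) (simp add: cr)
    finally have rexp: "r = lc n n (\<lambda>j. of_real (s j - c0) * cinner (e j) (q l)) e" .
    have Pir: "Pi *\<^sub>v r = r"
    proof -
      have "Pi *\<^sub>v lc n n (\<lambda>j. of_real (s j - c0) * cinner (e j) (q l)) e = lc n n (\<lambda>j. of_real (s j - c0) * cinner (e j) (q l)) e"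
      proof (rule lc_mat_partial[OF Pic ecv], intro allI impI)
        fix j assume j: "j < n"
        show "of_real (s j - c0) * cinner (e j) (q l) = 0 \<or> Pi *\<^sub>v e j = e j"
        proof (cases "s j > c0")
          case True thus ?thesis using Pie[OF j] by simp
        next
          case False
          show ?thesis
          proof (cases "s j < c0")
            case True
            hence "cinner (e j) (q l) = 0" using BA j l unfolding c0_def by blast
            thus ?thesis by simp
          next
            case False
            hence "s j = c0" using \<open>\<not> s j > c0\<close> by simp
            thus ?thesis by simp
          qed
        qed
      qed
      thus ?thesis using rexp by simp
    qed
    have Pql: "P *\<^sub>v q l = r + complex_of_real c0 \<cdot>\<^sub>v q l"
      unfolding r_def using Pc ql by (auto intro!: eq_vecI)
    have "Pi *\<^sub>v (P *\<^sub>v q l) = Pi *\<^sub>v r + Pi *\<^sub>v (complex_of_real c0 \<cdot>\<^sub>v q l)"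
      unfolding Pql by (rule mult_add_distrib_mat_vec[OF Pic rc]) (use ql in simp)
    also have "Pi *\<^sub>v (complex_of_real c0 \<cdot>\<^sub>v q l) = complex_of_real c0 \<cdot>\<^sub>v q l"
      using mult_mat_vec[OF Pic ql] Piq[OF l] by simp
    finally show ?thesis using Pir Pql by simp
  qed
  have inv: "Pi *\<^sub>v (P *\<^sub>v z) = P *\<^sub>v z" if z: "z \<in> carrier_vec n" and Pz: "Pi *\<^sub>v z = z" for z
  proof -
    have zexp: "z = lc n k (\<lambda>l. cinner (q l) z) q" using Pz Pim[OF z] by simp
    have "P *\<^sub>v z = P *\<^sub>v lc n k (\<lambda>l. cinner (q l) z) q"
      by (rule arg_cong[where f = "\<lambda>w. P *\<^sub>v w"], rule zexp)
    also have "\<dots> = lc n k (\<lambda>l. cinner (q l) z) (\<lambda>l. P *\<^sub>v q l)" by (rule mat_lc[OF Pc qc])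
    finally have Pzexp: "P *\<^sub>v z = lc n k (\<lambda>l. cinner (q l) z) (\<lambda>l. P *\<^sub>v q l)" .
    have "Pi *\<^sub>v lc n k (\<lambda>l. cinner (q l) z) (\<lambda>l. P *\<^sub>v q l) = lc n k (\<lambda>l. cinner (q l) z) (\<lambda>l. P *\<^sub>v q l)"
      by (rule lc_mat_partial[OF Pic]) (use Pc qc invq in auto)
    thus ?thesis using Pzexp by simp
  qed
  define H' where "H' = Pi * P * Pi - (1\<^sub>m n - Pi)"
  have c1: "Pi * P * Pi \<in> carrier_mat n n" and c2: "1\<^sub>m n - Pi \<in> carrier_mat n n" using Pic Pc by auto
  have H'c: "H' \<in> carrier_mat n n" unfolding H'_def by (rule minus_carrier_mat[OF c2])
  have Happ: "H' *\<^sub>v x = Pi *\<^sub>v (P *\<^sub>v (Pi *\<^sub>v x)) - (x - Pi *\<^sub>v x)" if x: "x \<in> carrier_vec n" for x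
  proof -
    have c1: "Pi * P * Pi \<in> carrier_mat n n" and c2: "1\<^sub>m n - Pi \<in> carrier_mat n n" using Pic Pc by auto
    have "H' *\<^sub>v x = (Pi * P * Pi) *\<^sub>v x - (1\<^sub>m n - Pi) *\<^sub>v x"
      unfolding H'_def by (rule minus_mult_distrib_mat_vec[OF c1 c2 x])
    also have "(Pi * P * Pi) *\<^sub>v x = Pi *\<^sub>v (P *\<^sub>v (Pi *\<^sub>v x))"
      using Pic Pc x by (simp add: assoc_mult_mat_vec[of _ n n _ n])
    also have "(1\<^sub>m n - Pi) *\<^sub>v x = x - Pi *\<^sub>v x"
      using minus_mult_distrib_mat_vec[OF one_carrier_mat Pic x] x by simp
    finally show ?thesis .
  qed
  have hH: "hermitian n H'" unfolding hermitian_def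
  proof (intro conjI ballI)
    show "H' \<in> carrier_mat n n" by (rule H'c)
    fix x y :: "complex vec" assume x: "x \<in> carrier_vec n" and y: "y \<in> carrier_vec n"
    have Pix: "Pi *\<^sub>v x \<in> carrier_vec n" and Piy: "Pi *\<^sub>v y \<in> carrier_vec n" using Pic x y by auto
    have PPix: "P *\<^sub>v (Pi *\<^sub>v x) \<in> carrier_vec n" and PPiy: "P *\<^sub>v (Pi *\<^sub>v y) \<in> carrier_vec n" using Pc Pix Piy by auto
    have a: "cinner x (Pi *\<^sub>v (P *\<^sub>v (Pi *\<^sub>v y))) = cinner (Pi *\<^sub>v (P *\<^sub>v (Pi *\<^sub>v x))) y"
    proof -
      have "cinner x (Pi *\<^sub>v (P *\<^sub>v (Pi *\<^sub>v y))) = cinner (Pi *\<^sub>v x) (P *\<^sub>v (Pi *\<^sub>v y))" by (rule Pis[OF x PPiy])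
      also have "\<dots> = cinner (P *\<^sub>v (Pi *\<^sub>v x)) (Pi *\<^sub>v y)" by (rule Ph[OF Pix Piy])
      also have "\<dots> = cinner (Pi *\<^sub>v (P *\<^sub>v (Pi *\<^sub>v x))) y" by (rule Pis[OF PPix y])
      finally show ?thesis .
    qed
    have b: "cinner x (Pi *\<^sub>v y) = cinner (Pi *\<^sub>v x) y" by (rule Pis[OF x y])
    have PPPx: "Pi *\<^sub>v (P *\<^sub>v (Pi *\<^sub>v x)) \<in> carrier_vec n" using Pic PPix by simp
    have PPPy: "Pi *\<^sub>v (P *\<^sub>v (Pi *\<^sub>v y)) \<in> carrier_vec n" using Pic PPiy by simp
    show "cinner x (H' *\<^sub>v y) = cinner (H' *\<^sub>v x) y"
      unfolding Happ[OF x] Happ[OF y]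
      using a b x y Pix Piy PPPx PPPy
      by (simp add: cinner_minus_right[of _ n] cinner_minus_left[of _ n])
  qed
  from spectral_sorted[OF hH] obtain f mu where fm: "orthonormal n n f \<and> (\<forall>j<n. H' *\<^sub>v f j = complex_of_real (mu j) \<cdot>\<^sub>v f j) \<and>
     (\<forall>i j. i \<le> j \<longrightarrow> j < n \<longrightarrow> mu j \<le> mu i)" by (elim exE)
  have of: "orthonormal n n f" using fm by (rule conjunct1)
  have evH: "\<forall>j<n. H' *\<^sub>v f j = complex_of_real (mu j) \<cdot>\<^sub>v f j" using fm by (elim conjE)
  have descmu: "\<forall>i j. i \<le> j \<longrightarrow> j < n \<longrightarrow> mu j \<le> mu i" using fm by (elim conjE)
  have fc: "\<And>j. j < n \<Longrightarrow> f j \<in> carrier_vec n" using of by (simp add: orthonormal_carrier)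
  have cases: "(mu j \<noteq> -1 \<longrightarrow> Pi *\<^sub>v f j = f j \<and> P *\<^sub>v f j = complex_of_real (mu j) \<cdot>\<^sub>v f j \<and> mu j \<ge> 0) \<and>
               (mu j = -1 \<longrightarrow> Pi *\<^sub>v f j = 0\<^sub>v n)" if j: "j < n" for j
  proof -
    have fj: "f j \<in> carrier_vec n" using fc[OF j] .
    define g where "g = Pi *\<^sub>v f j"
    have gc: "g \<in> carrier_vec n" unfolding g_def using Pic fj by simp
    have Pig: "Pi *\<^sub>v g = g" unfolding g_def by (rule Pii[OF fj])
    have Pgc: "P *\<^sub>v g \<in> carrier_vec n" using Pc gc by simp
    have PiPgc: "Pi *\<^sub>v (P *\<^sub>v g) \<in> carrier_vec n" using Pic Pgc by simp
    have Hf: "Pi *\<^sub>v (P *\<^sub>v g) - (f j - g) = complex_of_real (mu j) \<cdot>\<^sub>v f j"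
      using Happ[OF fj] evH j unfolding g_def by simp
    have star: "Pi *\<^sub>v (P *\<^sub>v g) = complex_of_real (mu j) \<cdot>\<^sub>v g"
    proof -
      have "Pi *\<^sub>v (Pi *\<^sub>v (P *\<^sub>v g) - (f j - g)) = Pi *\<^sub>v (Pi *\<^sub>v (P *\<^sub>v g)) - Pi *\<^sub>v (f j - g)"
        by (rule mult_minus_distrib_mat_vec[OF Pic PiPgc]) (use fj gc in simp)
      also have "Pi *\<^sub>v (Pi *\<^sub>v (P *\<^sub>v g)) = Pi *\<^sub>v (P *\<^sub>v g)" by (rule Pii[OF Pgc])
      also have "Pi *\<^sub>v (f j - g) = Pi *\<^sub>v f j - Pi *\<^sub>v g" by (rule mult_minus_distrib_mat_vec[OF Pic fj gc])
      also have "Pi *\<^sub>v f j - Pi *\<^sub>v g = 0\<^sub>v n" unfolding Pig unfolding g_def using Pic fj by simp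
      finally have "Pi *\<^sub>v (Pi *\<^sub>v (P *\<^sub>v g) - (f j - g)) = Pi *\<^sub>v (P *\<^sub>v g)" using PiPgc by simp
      moreover have "Pi *\<^sub>v (complex_of_real (mu j) \<cdot>\<^sub>v f j) = complex_of_real (mu j) \<cdot>\<^sub>v g"
        unfolding g_def by (rule mult_mat_vec[OF Pic fj])
      ultimately show ?thesis using Hf by simp
    qed
    have comp: "(complex_of_real (mu j) + 1) * (g $ a - f j $ a) = 0" if a: "a < n" for a
    proof -
      have "(Pi *\<^sub>v (P *\<^sub>v g) - (f j - g)) $ a = (complex_of_real (mu j) \<cdot>\<^sub>v f j) $ a" using Hf by simp
      hence "(Pi *\<^sub>v (P *\<^sub>v g)) $ a - (f j $ a - g $ a) = complex_of_real (mu j) * f j $ a"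
        using a fj gc PiPgc by simp
      moreover have "(Pi *\<^sub>v (P *\<^sub>v g)) $ a = complex_of_real (mu j) * g $ a" using star a gc by simp
      ultimately show ?thesis by (simp add: algebra_simps)
    qed
    show ?thesis
    proof (intro conjI impI)
      assume ne: "mu j \<noteq> -1"
      have "complex_of_real (mu j) + 1 \<noteq> 0"
      proof
        assume "complex_of_real (mu j) + 1 = 0"
        hence "complex_of_real (mu j) = - 1" by (simp add: eq_neg_iff_add_eq_0)
        hence "complex_of_real (mu j) = complex_of_real (-1)" by simp
        hence "mu j = -1" by (simp only: of_real_eq_iff)
        thus False using ne by simp
      qed
      hence "\<And>a. a < n \<Longrightarrow> g $ a = f j $ a" using comp by simp
      hence gf: "g = f j" using gc fj by (auto intro!: eq_vecI)
      thus Pif: "Pi *\<^sub>v f j = f j" unfolding g_def .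
      have "P *\<^sub>v f j = Pi *\<^sub>v (P *\<^sub>v g)" using inv[OF gc Pig] gf by simp
      also have "\<dots> = complex_of_real (mu j) \<cdot>\<^sub>v f j" using star gf by simp
      finally show Pf: "P *\<^sub>v f j = complex_of_real (mu j) \<cdot>\<^sub>v f j" .
      show "mu j \<ge> 0" by (rule psd_eig_nonneg[OF P fj _ Pf]) (use of j in \<open>simp add: orthonormal_inner\<close>)
    next
      assume m1: "mu j = -1"
      have "cinner g (P *\<^sub>v g) = cinner (Pi *\<^sub>v g) (P *\<^sub>v g)" using Pig by simp
      also have "\<dots> = cinner g (Pi *\<^sub>v (P *\<^sub>v g))" using Pis[OF gc Pgc] by simp
      also have "\<dots> = - cinner g g" using star m1 gc by (simp add: cinner_smult_right[of _ n])
      finally have e: "cinner g (P *\<^sub>v g) = - cinner g g" .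
      have "Re (cinner g (P *\<^sub>v g)) \<ge> 0" using Pq[OF gc] by simp
      moreover have "cinner g g = of_real (Re (cinner g g))" "Re (cinner g g) \<ge> 0" using cinner_self_Re[OF gc] by auto
      ultimately have "Re (cinner g g) = 0" using e by simp
      hence "cinner g g = 0" using \<open>cinner g g = of_real (Re (cinner g g))\<close> by simp
      hence "g = 0\<^sub>v n" by (rule cinner_self_zero[OF gc])
      thus "Pi *\<^sub>v f j = 0\<^sub>v n" unfolding g_def .
    qed
  qed
  have tval: "Re (cinner (f j) (Pi *\<^sub>v f j)) = (if mu j = -1 then 0 else 1)" if j: "j < n" for j
    using cases[OF j] fc[OF j] of j by (auto simp: orthonormal_inner)
  have tsum: "(\<Sum>j<n. Re (cinner (f j) (Pi *\<^sub>v f j))) = real k"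
  proof -
    have "cinner (f j) (Pi *\<^sub>v f j) = of_real (\<Sum>l<k. (cmod (cinner (f j) (q l)))\<^sup>2)" if j: "j < n" for j
    proof -
      have "cinner (f j) (Pi *\<^sub>v f j) = (\<Sum>l<k. cinner (q l) (f j) * cinner (f j) (q l))"
        using Pim[OF fc[OF j]] fc[OF j] qc by (simp add: cinner_lc_right)
      also have "\<dots> = (\<Sum>l<k. cnj (cinner (f j) (q l)) * cinner (f j) (q l))"
        using fc[OF j] qc by (auto intro!: sum.cong simp: cinner_swap[OF fc[OF j]])
      also have "\<dots> = of_real (\<Sum>l<k. (cmod (cinner (f j) (q l)))\<^sup>2)" unfolding cmod_sq_eq by (simp add: of_real_sum)
      finally show ?thesis .
    qed
    hence "(\<Sum>j<n. Re (cinner (f j) (Pi *\<^sub>v f j))) = (\<Sum>j<n. \<Sum>l<k. (cmod (cinner (f j) (q l)))\<^sup>2)" by simp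
    also have "\<dots> = (\<Sum>l<k. \<Sum>j<n. (cmod (cinner (f j) (q l)))\<^sup>2)" by (rule sum.swap)
    also have "\<dots> = (\<Sum>l<k. Re (cinner (q l) (q l)))" using parseval_real[OF of] qc by simp
    also have "\<dots> = real k" using oq by (simp add: orthonormal_inner)
    finally show ?thesis .
  qed
  have cnt: "(\<Sum>j<n. (if mu j = -1 then 0 else 1 :: real)) = real k" using tsum tval by simp
  have vals: "\<forall>j<n. mu j = -1 \<or> mu j \<ge> 0" using cases by blast
  have inK: "\<forall>j<k. mu j \<noteq> -1" and outK: "\<forall>j. k \<le> j \<longrightarrow> j < n \<longrightarrow> mu j = -1"
    using count_sorted[OF kn descmu vals cnt] by auto
  have fin: "\<forall>i<k. pmat n k q *\<^sub>v f i = f i" using cases inK kn unfolding Pi_def by auto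
  have fout: "\<forall>j. k \<le> j \<longrightarrow> j < n \<longrightarrow> pmat n k q *\<^sub>v f j = 0\<^sub>v n" using cases outK unfolding Pi_def by auto
  have evf: "\<forall>i<k. P *\<^sub>v f i = complex_of_real (mu i) \<cdot>\<^sub>v f i" using cases inK kn by auto
  have ofk: "orthonormal n k f" by (rule orthonormal_mono[OF of kn])
  have TR: "\<forall>M\<in>carrier_mat n n. (\<Sum>i<k. cinner (f i) (M *\<^sub>v f i)) = (\<Sum>l<k. cinner (q l) (M *\<^sub>v q l))"
    using trace_eq[OF oq of kn fin fout] by blast
  have "complex_of_real (\<Sum>i<k. mu i) = (\<Sum>i<k. cinner (f i) (P *\<^sub>v f i))"
    using evf fc kn of by (auto simp: of_real_sum cinner_smult_right[of _ n] orthonormal_inner intro!: sum.cong)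
  also have "\<dots> = of_real (\<Sum>j<k. s j)" using TR Pc qeq by simp
  finally have musum: "(\<Sum>i<k. mu i) = (\<Sum>j<k. s j)" by (simp only: of_real_eq_iff)
  have mule: "mu i \<le> s i" if i: "i < k" for i
    by (rule interlacing[OF H oe ev desc kn ofk evf _ i]) (use descmu kn in auto)
  have "(\<Sum>i<k. s i - mu i) = 0" using musum by (simp add: sum_subtractf)
  hence "\<forall>i\<in>{..<k}. s i - mu i = 0"
    using sum_nonneg_eq_0_iff[of "{..<k}" "\<lambda>i. s i - mu i"] mule by simp
  hence "\<forall>i<k. mu i = s i" by simp
  hence "\<forall>i<k. P *\<^sub>v f i = complex_of_real (s i) \<cdot>\<^sub>v f i" using evf by simp
  thus ?thesis using ofk TR by blast
qed



lemma ky_fan_nonneg: assumes X: "X \<in> carrier_mat n n" and kn: "k \<le> n"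
  shows "ky_fan_norm k X \<ge> 0"
proof -
  obtain e s w where d: "orthonormal n n e" "orthonormal n n w"
    "\<forall>j<n. mat_abs X *\<^sub>v e j = complex_of_real (s j) \<cdot>\<^sub>v e j" "\<forall>j<n. s j \<ge> 0"
    "\<forall>i j. i \<le> j \<longrightarrow> j < n \<longrightarrow> s j \<le> s i"
    "\<forall>j<n. X *\<^sub>v e j = complex_of_real (s j) \<cdot>\<^sub>v w j"
    "\<forall>j. 1 \<le> j \<longrightarrow> j \<le> n \<longrightarrow> sing_val X j = s (j - 1)"
    using svd_data[OF X] by (elim exE conjE) blast
  show ?thesis unfolding ky_fan_sum[OF d(7) kn] using d(4) kn by (auto intro!: sum_nonneg)
qed

lemma adj_unitary: assumes "unitary_mat n U" shows "unitary_mat n (adj U)"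
proof -
  have Uc: "U \<in> carrier_mat n n" and a: "adj U * U = 1\<^sub>m n" and b: "U * adj U = 1\<^sub>m n"
    using assms unfolding unitary_mat_def by auto
  show ?thesis unfolding unitary_mat_def using adj_carrier[OF Uc] adj_adj[OF Uc] a b by simp
qed

lemma sum_1k: "(\<Sum>i = 1..k. g i) = (\<Sum>i<k. g (Suc i))"
  using sum.atLeast1_atMost_eq[of g k] by simp

theorem mainTheorem11:
  fixes A B U :: "complex mat" and n k :: nat
  assumes "A \<in> carrier_mat n n" and "B \<in> carrier_mat n n"
    and "1 \<le> k" and "k \<le> n"
    and "unitary_mat n U" and "A = U * mat_abs A"
    and "sing_val A k > 0"
  shows "(\<exists>c::complex. cmod c = 1 \<and>
            ky_fan_norm k (A + c \<cdot>\<^sub>m B) = ky_fan_norm k A + ky_fan_norm k B)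
    \<longleftrightarrow> (\<exists>u :: nat \<Rightarrow> complex vec.
            (\<forall>i \<in> {1..k}. u i \<in> carrier_vec n) \<and>
            (\<forall>i \<in> {1..k}. \<forall>j \<in> {1..k}. cinner (u i) (u j) = (if i = j then 1 else 0)) \<and>
            (\<forall>i \<in> {1..k}. mat_abs A *\<^sub>v u i = complex_of_real (sing_val A i) \<cdot>\<^sub>v u i) \<and>
            cmod (\<Sum>i = 1..k. cinner (u i) ((adj U * B) *\<^sub>v u i)) = ky_fan_norm k B)"
proof -
  note Ac = assms(1) and Bc = assms(2) and k1 = assms(3) and kn = assms(4) and U = assms(5)
    and AU = assms(6) and pos0 = assms(7)
  have Uc: "U \<in> carrier_mat n n" and UU: "adj U * U = 1\<^sub>m n" using U unfolding unitary_mat_def by auto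
  have aUc: "adj U \<in> carrier_mat n n" by (rule adj_carrier[OF Uc])
  let ?P = "mat_abs A"
  have psd: "psd_mat n ?P" using mat_abs_props[OF Ac] by simp
  have Pc: "?P \<in> carrier_mat n n" using psd unfolding psd_mat_def by auto
  obtain e s w where d: "orthonormal n n e" "orthonormal n n w"
    "\<forall>j<n. ?P *\<^sub>v e j = complex_of_real (s j) \<cdot>\<^sub>v e j" "\<forall>j<n. s j \<ge> 0"
    "\<forall>i j. i \<le> j \<longrightarrow> j < n \<longrightarrow> s j \<le> s i"
    "\<forall>j<n. A *\<^sub>v e j = complex_of_real (s j) \<cdot>\<^sub>v w j"
    "\<forall>j. 1 \<le> j \<longrightarrow> j \<le> n \<longrightarrow> sing_val A j = s (j - 1)"
    using svd_data[OF Ac] by (elim exE conjE) blast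
  have sv: "\<And>i. i < k \<Longrightarrow> sing_val A (Suc i) = s i" using d(7) kn by auto
  have pos: "s (k - 1) > 0" using pos0 d(7) k1 kn by auto
  have KA: "ky_fan_norm k A = (\<Sum>j<k. s j)" by (rule ky_fan_sum[OF d(7) kn])
  have KBnn: "ky_fan_norm k B \<ge> 0" by (rule ky_fan_nonneg[OF Bc kn])
  have Avec: "\<And>x. x \<in> carrier_vec n \<Longrightarrow> A *\<^sub>v x = U *\<^sub>v (?P *\<^sub>v x)"
  proof -
    fix x :: "complex vec" assume x: "x \<in> carrier_vec n"
    have "A *\<^sub>v x = (U * ?P) *\<^sub>v x" using AU by simp
    also have "\<dots> = U *\<^sub>v (?P *\<^sub>v x)" using Uc Pc x by (simp add: assoc_mult_mat_vec[of _ n n _ n])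
    finally show "A *\<^sub>v x = U *\<^sub>v (?P *\<^sub>v x)" .
  qed
  let ?M = "adj U * B"
  have Mc: "?M \<in> carrier_mat n n" using aUc Bc by simp
  have Mvec: "\<And>x. x \<in> carrier_vec n \<Longrightarrow> ?M *\<^sub>v x = adj U *\<^sub>v (B *\<^sub>v x)"
    using aUc Bc by (simp add: assoc_mult_mat_vec[of _ n n _ n])
  show ?thesis
  proof
    assume "\<exists>c::complex. cmod c = 1 \<and> ky_fan_norm k (A + c \<cdot>\<^sub>m B) = ky_fan_norm k A + ky_fan_norm k B"
    then obtain c where c: "cmod c = 1" and par: "ky_fan_norm k (A + c \<cdot>\<^sub>m B) = ky_fan_norm k A + ky_fan_norm k B"
      by blast
    have Xc: "A + c \<cdot>\<^sub>m B \<in> carrier_mat n n" using Ac Bc by simp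
    obtain q w' where oq: "orthonormal n k q" and ow: "orthonormal n k w'"
      and att: "(\<Sum>i<k. cinner (w' i) ((A + c \<cdot>\<^sub>m B) *\<^sub>v q i)) = complex_of_real (ky_fan_norm k (A + c \<cdot>\<^sub>m B))"
      using kf_attained[OF Xc kn] by blast
    have qc: "\<And>i. i < k \<Longrightarrow> q i \<in> carrier_vec n" using oq by (simp add: orthonormal_carrier)
    have wc: "\<And>i. i < k \<Longrightarrow> w' i \<in> carrier_vec n" using ow by (simp add: orthonormal_carrier)
    let ?a = "\<Sum>i<k. cinner (w' i) (A *\<^sub>v q i)"
    let ?b = "\<Sum>i<k. cinner (w' i) (B *\<^sub>v q i)"
    have ab: "?a + c * ?b = complex_of_real (ky_fan_norm k A + ky_fan_norm k B)"
      using att par sum_cinner_combo[OF Ac Bc oq ow] by simp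
    have ba: "cmod ?a \<le> ky_fan_norm k A" by (rule kf_bound[OF Ac kn k1 oq ow])
    have bb: "cmod (c * ?b) \<le> ky_fan_norm k B" using kf_bound[OF Bc kn k1 oq ow] c by (simp add: norm_mult)
    have aeq: "?a = complex_of_real (ky_fan_norm k A)" and beq: "c * ?b = complex_of_real (ky_fan_norm k B)"
      using complex_sum_eq_bounds[OF ab ba bb] by auto
    define y where "y = (\<lambda>i. adj U *\<^sub>v w' i)"
    have oy: "orthonormal n k y" unfolding y_def by (rule unitary_orthonormal[OF adj_unitary[OF U] ow])
    have "(\<Sum>i<k. cinner (y i) (?P *\<^sub>v q i)) = ?a"
    proof (rule sum.cong)
      fix i assume "i \<in> {..<k}"
      hence i: "i < k" by simp
      have Pq: "?P *\<^sub>v q i \<in> carrier_vec n" using Pc qc[OF i] by simp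
      have "cinner (w' i) (A *\<^sub>v q i) = cinner (w' i) (U *\<^sub>v (?P *\<^sub>v q i))" using Avec[OF qc[OF i]] by simp
      also have "\<dots> = cinner (adj U *\<^sub>v w' i) (?P *\<^sub>v q i)" by (rule mat_cinner[OF Uc wc[OF i] Pq])
      finally show "cinner (y i) (?P *\<^sub>v q i) = cinner (w' i) (A *\<^sub>v q i)" unfolding y_def by simp
    qed simp
    hence yPq: "(\<Sum>i<k. cinner (y i) (?P *\<^sub>v q i)) = of_real (\<Sum>j<k. s j)" using aeq KA by simp
    have yq: "\<forall>i<k. y i = q i" and qPq: "(\<Sum>i<k. cinner (q i) (?P *\<^sub>v q i)) = of_real (\<Sum>j<k. s j)"
      using y_eq_q[OF psd d(1) d(3) d(5) d(4) kn k1 pos oq oy yPq] by auto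
    have bM: "(\<Sum>i<k. cinner (q i) (?M *\<^sub>v q i)) = ?b"
    proof (rule sum.cong)
      fix i assume "i \<in> {..<k}"
      hence i: "i < k" by simp
      have Bq: "B *\<^sub>v q i \<in> carrier_vec n" using Bc qc[OF i] by simp
      have "cinner (q i) (?M *\<^sub>v q i) = cinner (adj U *\<^sub>v w' i) (adj U *\<^sub>v (B *\<^sub>v q i))"
        using yq i Mvec[OF qc[OF i]] unfolding y_def by simp
      also have "\<dots> = cinner (w' i) (B *\<^sub>v q i)" by (rule unitary_cinner[OF adj_unitary[OF U] wc[OF i] Bq])
      finally show "cinner (q i) (?M *\<^sub>v q i) = cinner (w' i) (B *\<^sub>v q i)" .
    qed simp
    obtain f where of: "orthonormal n k f" and evf: "\<forall>i<k. ?P *\<^sub>v f i = complex_of_real (s i) \<cdot>\<^sub>v f i"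
      and tr: "\<forall>M\<in>carrier_mat n n. (\<Sum>i<k. cinner (f i) (M *\<^sub>v f i)) = (\<Sum>l<k. cinner (q l) (M *\<^sub>v q l))"
      using only_if_core[OF psd d(1) d(3) d(5) d(4) kn k1 pos oq qPq] by blast
    define u where "u = (\<lambda>i. f (i - 1))"
    show "\<exists>u :: nat \<Rightarrow> complex vec.
            (\<forall>i \<in> {1..k}. u i \<in> carrier_vec n) \<and>
            (\<forall>i \<in> {1..k}. \<forall>j \<in> {1..k}. cinner (u i) (u j) = (if i = j then 1 else 0)) \<and>
            (\<forall>i \<in> {1..k}. mat_abs A *\<^sub>v u i = complex_of_real (sing_val A i) \<cdot>\<^sub>v u i) \<and>
            cmod (\<Sum>i = 1..k. cinner (u i) ((adj U * B) *\<^sub>v u i)) = ky_fan_norm k B"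
    proof (intro exI[of _ u] conjI ballI)
      fix i assume "i \<in> {1..k}"
      hence i: "i - 1 < k" "1 \<le> i" "i \<le> k" by auto
      show "u i \<in> carrier_vec n" unfolding u_def using of i by (simp add: orthonormal_carrier)
      have "sing_val A i = s (i - 1)" using d(7) i kn by auto
      thus "mat_abs A *\<^sub>v u i = complex_of_real (sing_val A i) \<cdot>\<^sub>v u i" unfolding u_def using evf i by simp
      fix j assume "j \<in> {1..k}"
      hence j: "j - 1 < k" "1 \<le> j" by auto
      have "(i - 1 = j - 1) = (i = j)" using i j by auto
      thus "cinner (u i) (u j) = (if i = j then 1 else 0)" unfolding u_def using orthonormal_inner[OF of i(1) j(1)] by simp
    next
      have "(\<Sum>i = 1..k. cinner (u i) (?M *\<^sub>v u i)) = (\<Sum>i<k. cinner (f i) (?M *\<^sub>v f i))"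
        unfolding sum_1k u_def by simp
      also have "\<dots> = ?b" using tr Mc bM by simp
      finally have "cmod (\<Sum>i = 1..k. cinner (u i) (?M *\<^sub>v u i)) = cmod (c * ?b)" using c by (simp add: norm_mult)
      also have "\<dots> = ky_fan_norm k B" using beq KBnn by simp
      finally show "cmod (\<Sum>i = 1..k. cinner (u i) ((adj U * B) *\<^sub>v u i)) = ky_fan_norm k B" .
    qed
  next
    assume "\<exists>u :: nat \<Rightarrow> complex vec.
            (\<forall>i \<in> {1..k}. u i \<in> carrier_vec n) \<and>
            (\<forall>i \<in> {1..k}. \<forall>j \<in> {1..k}. cinner (u i) (u j) = (if i = j then 1 else 0)) \<and>
            (\<forall>i \<in> {1..k}. mat_abs A *\<^sub>v u i = complex_of_real (sing_val A i) \<cdot>\<^sub>v u i) \<and>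
            cmod (\<Sum>i = 1..k. cinner (u i) ((adj U * B) *\<^sub>v u i)) = ky_fan_norm k B"
    then obtain u where u1: "\<forall>i \<in> {1..k}. u i \<in> carrier_vec n"
      and u2: "\<forall>i \<in> {1..k}. \<forall>j \<in> {1..k}. cinner (u i) (u j) = (if i = j then 1 else 0)"
      and u3: "\<forall>i \<in> {1..k}. mat_abs A *\<^sub>v u i = complex_of_real (sing_val A i) \<cdot>\<^sub>v u i"
      and u4: "cmod (\<Sum>i = 1..k. cinner (u i) ((adj U * B) *\<^sub>v u i)) = ky_fan_norm k B"
      by (elim exE conjE)
    define x where "x = (\<lambda>i. u (Suc i))"
    have ox: "orthonormal n k x" unfolding orthonormal_def x_def using u1 u2 by auto
    have xc: "\<And>i. i < k \<Longrightarrow> x i \<in> carrier_vec n" using ox by (simp add: orthonormal_carrier)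
    have evx: "\<And>i. i < k \<Longrightarrow> ?P *\<^sub>v x i = complex_of_real (s i) \<cdot>\<^sub>v x i"
      using u3 sv unfolding x_def by auto
    define y where "y = (\<lambda>i. U *\<^sub>v x i)"
    have oy: "orthonormal n k y" unfolding y_def by (rule unitary_orthonormal[OF U ox])
    define S where "S = (\<Sum>i<k. cinner (x i) (?M *\<^sub>v x i))"
    have Su: "cmod S = ky_fan_norm k B" using u4 unfolding S_def x_def sum_1k by simp
    define c where "c = (if S = 0 then 1 else cnj S / complex_of_real (cmod S))"
    have c1: "cmod c = 1" unfolding c_def by (auto simp: norm_divide)
    have cS: "c * S = complex_of_real (cmod S)"
    proof (cases "S = 0")
      case True thus ?thesis unfolding c_def by simp
    next
      case False
      hence "cmod S \<noteq> 0" by simp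
      have "S * cnj S = complex_of_real (cmod S) * complex_of_real (cmod S)"
        by (metis complex_norm_square of_real_mult power2_eq_square)
      thus ?thesis unfolding c_def using False \<open>cmod S \<noteq> 0\<close> by (simp add: field_simps)
    qed
    have aX: "(\<Sum>i<k. cinner (y i) (A *\<^sub>v x i)) = complex_of_real (ky_fan_norm k A)"
    proof -
      have "(\<Sum>i<k. cinner (y i) (A *\<^sub>v x i)) = (\<Sum>i<k. complex_of_real (s i))"
      proof (rule sum.cong)
        fix i assume "i \<in> {..<k}"
        hence i: "i < k" by simp
        have Px: "?P *\<^sub>v x i \<in> carrier_vec n" using Pc xc[OF i] by simp
        have "cinner (y i) (A *\<^sub>v x i) = cinner (U *\<^sub>v x i) (U *\<^sub>v (?P *\<^sub>v x i))"
          unfolding y_def using Avec[OF xc[OF i]] by simp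
        also have "\<dots> = cinner (x i) (?P *\<^sub>v x i)" by (rule unitary_cinner[OF U xc[OF i] Px])
        also have "\<dots> = complex_of_real (s i)" using evx[OF i] xc[OF i] ox i
          by (simp add: cinner_smult_right[of _ n] orthonormal_inner)
        finally show "cinner (y i) (A *\<^sub>v x i) = complex_of_real (s i)" .
      qed simp
      thus ?thesis unfolding KA by simp
    qed
    have bX: "(\<Sum>i<k. cinner (y i) (B *\<^sub>v x i)) = S" unfolding S_def
    proof (rule sum.cong)
      fix i assume "i \<in> {..<k}"
      hence i: "i < k" by simp
      have Bx: "B *\<^sub>v x i \<in> carrier_vec n" using Bc xc[OF i] by simp
      have "cinner (y i) (B *\<^sub>v x i) = cinner (x i) (adj U *\<^sub>v (B *\<^sub>v x i))"
        unfolding y_def using cinner_adj[OF Uc xc[OF i] Bx] by simp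
      thus "cinner (y i) (B *\<^sub>v x i) = cinner (x i) (?M *\<^sub>v x i)" using Mvec[OF xc[OF i]] by simp
    qed simp
    have Xc: "A + c \<cdot>\<^sub>m B \<in> carrier_mat n n" using Ac Bc by simp
    have T1: "(\<Sum>i<k. cinner (y i) ((A + c \<cdot>\<^sub>m B) *\<^sub>v x i)) = complex_of_real (ky_fan_norm k A + ky_fan_norm k B)"
      using sum_cinner_combo[OF Ac Bc ox oy, of c] aX bX cS Su by simp
    have T2: "cmod (\<Sum>i<k. cinner (y i) ((A + c \<cdot>\<^sub>m B) *\<^sub>v x i)) \<le> ky_fan_norm k (A + c \<cdot>\<^sub>m B)"
      by (rule kf_bound[OF Xc kn k1 ox oy])
    have KAnn: "ky_fan_norm k A \<ge> 0" by (rule ky_fan_nonneg[OF Ac kn])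
    have "cmod (\<Sum>i<k. cinner (y i) ((A + c \<cdot>\<^sub>m B) *\<^sub>v x i)) = ky_fan_norm k A + ky_fan_norm k B"
      unfolding T1 norm_of_real using KAnn KBnn by simp
    hence ge: "ky_fan_norm k A + ky_fan_norm k B \<le> ky_fan_norm k (A + c \<cdot>\<^sub>m B)" using T2 by simp
    have le: "ky_fan_norm k (A + c \<cdot>\<^sub>m B) \<le> ky_fan_norm k A + ky_fan_norm k B"
      by (rule kf_triangle[OF Ac Bc kn k1 c1])
    show "\<exists>c::complex. cmod c = 1 \<and> ky_fan_norm k (A + c \<cdot>\<^sub>m B) = ky_fan_norm k A + ky_fan_norm k B"
      using ge le c1 by (intro exI[of _ c]) simp
  qed
qed


end
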